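(* Let $Y=(Y(t))_{0\leq t\leq 1}$ be a Yule-Simon process with parameter $\rho>0$. (i) If $\rho>1$, then $\mathbb{E}[Y(t)]=\frac{\rho}{\rho-1}\,t$ for every $t\in[0,1]$. (ii) If $\rho>2$, then for every $0< s\leq t\leq 1$, $$\mathbb{E}[Y(t)Y(s)]=\frac{\rho^2}{(\rho-1)(\rho-2)}\, s\left(\frac{t}{s}\right)^{1/\rho}.$$
   Context: A Yule-Simon process with parameter $\rho>0$ is an integer-valued process $Y=(Y(t))_{0\leq t\leq 1}$ which is a time-inhomogeneous pure birth (counting) process started from $Y(0)=0$ a.s., with time-dependent birth rates $\lambda_k(t)=\lim_{h\to0+}h^{-1}\mathbb{P}(Y(t+h)=k+1\mid Y(t)=k)$ for $0\le t<1$, $k\in\mathbb{N}$, given by $\lambda_0(t)=1/(1-t)$ and $\lambda_k(t)=k/(\rho t)$ for $k\geq 1$. *)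

theory Defs
  imports "HOL-Probability.Probability"
begin

definition cond_prob :: "'a measure \<Rightarrow> 'a set \<Rightarrow> 'a set \<Rightarrow> real" where
  "cond_prob M A B = measure M (A \<inter> B) / measure M B"

definition yule_simon_rate :: "real \<Rightarrow> nat \<Rightarrow> real \<Rightarrow> real" where
  "yule_simon_rate \<rho> k t = (if k = 0 then 1 / (1 - t) else real k / (\<rho> * t))"

text \<open>A (time-inhomogeneous) pure birth counting process on the time interval [0,1]
  with birth rates lam k t, started at 0: a stochastically continuous Markov process with
  values in the naturals, nondecreasing, with
  P(Y(t+h) = k+1 | Y(t) = k) = lam k t h + o(h) and P(Y(t+h) = k | Y(t) = k) = 1 - lam k t h + o(h).\<close>
definition pure_birth_process ::
  "'a measure \<Rightarrow> (real \<Rightarrow> 'a \<Rightarrow> nat) \<Rightarrow> (nat \<Rightarrow> real \<Rightarrow> real) \<Rightarrow> bool" where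
  "pure_birth_process M Y lam \<longleftrightarrow>
     prob_space M \<and>
     (\<forall>t\<in>{0..1}. Y t \<in> measurable M (count_space UNIV)) \<and>
     (AE \<omega> in M. Y 0 \<omega> = 0) \<and>
     (\<forall>s t. 0 \<le> s \<and> s \<le> t \<and> t \<le> 1 \<longrightarrow> (AE \<omega> in M. Y s \<omega> \<le> Y t \<omega>)) \<and>
     (\<forall>t\<in>{0..1}. ((\<lambda>u. measure M {\<omega>\<in>space M. Y u \<omega> \<noteq> Y t \<omega>}) \<longlongrightarrow> 0) (at t within {0..1})) \<and>
     (\<forall>(n::nat) (s::nat \<Rightarrow> real) (j::nat \<Rightarrow> nat) t k.
        0 \<le> s 0 \<and> (\<forall>i<n. s i < s (Suc i)) \<and> s n < t \<and> t \<le> 1 \<and>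
        measure M {\<omega>\<in>space M. \<forall>i\<le>n. Y (s i) \<omega> = j i} > 0 \<longrightarrow>
        cond_prob M {\<omega>\<in>space M. Y t \<omega> = k} {\<omega>\<in>space M. \<forall>i\<le>n. Y (s i) \<omega> = j i}
          = cond_prob M {\<omega>\<in>space M. Y t \<omega> = k} {\<omega>\<in>space M. Y (s n) \<omega> = j n}) \<and>
     (\<forall>t k. 0 \<le> t \<and> t < 1 \<and> measure M {\<omega>\<in>space M. Y t \<omega> = k} > 0 \<longrightarrow>
        ((\<lambda>h. cond_prob M {\<omega>\<in>space M. Y (t + h) \<omega> = Suc k} {\<omega>\<in>space M. Y t \<omega> = k} / h)
           \<longlongrightarrow> lam k t) (at_right 0) \<and>
        ((\<lambda>h. (1 - cond_prob M {\<omega>\<in>space M. Y (t + h) \<omega> = k} {\<omega>\<in>space M. Y t \<omega> = k}) / h)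
           \<longlongrightarrow> lam k t) (at_right 0))"

definition yule_simon_process :: "'a measure \<Rightarrow> (real \<Rightarrow> 'a \<Rightarrow> nat) \<Rightarrow> real \<Rightarrow> bool" where
  "yule_simon_process M Y \<rho> \<longleftrightarrow> pure_birth_process M Y (yule_simon_rate \<rho>)"

end

theory Submission
  imports Defs
begin

lemma dini_mono_aux:
  fixes g :: "real \<Rightarrow> real"
  assumes "a \<le> b" and "\<epsilon> > 0"
  and R: "\<And>x e. x \<in> {a..<b} \<Longrightarrow> e > 0 \<Longrightarrow> \<exists>\<delta>>0. \<forall>h. 0 < h \<and> h < \<delta> \<longrightarrow> g x - e*h \<le> g (x+h)"
  and L: "\<And>x e. x \<in> {a<..b} \<Longrightarrow> e > 0 \<Longrightarrow> \<exists>\<delta>>0. \<forall>y. x - \<delta> < y \<and> y < x \<longrightarrow> g y \<le> g x + e"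
  shows "g a - \<epsilon> * (b - a) \<le> g b"
proof -
  define S where "S = {x\<in>{a..b}. g a - \<epsilon>*(x-a) \<le> g x}"
  have aS: "a \<in> S" using assms(1) by (simp add: S_def)
  have bdd: "bdd_above S" unfolding S_def by (rule bdd_aboveI[of _ b]) auto
  define c where "c = Sup S"
  have ac: "a \<le> c" unfolding c_def using aS bdd by (rule cSup_upper)
  have cb: "c \<le> b" unfolding c_def using aS by (intro cSup_least) (auto simp: S_def)
  have cS: "c \<in> S"
  proof (cases "c = a")
    case True then show ?thesis using aS by simp
  next
    case False
    hence ac': "a < c" using ac by simp
    have "g a - \<epsilon>*(c-a) \<le> g c + \<eta>" if eta: "\<eta> > 0" for \<eta>
    proof -
      obtain \<delta> where d: "\<delta> > 0" "\<forall>y. c - \<delta> < y \<and> y < c \<longrightarrow> g y \<le> g c + \<eta>"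
        using L[of c \<eta>] ac' cb eta by auto
      have "c - \<delta> < Sup S" using d(1) c_def by simp
      then obtain y where y: "y \<in> S" "c - \<delta> < y" using aS less_cSupE by blast
      have yc: "y \<le> c" unfolding c_def using y(1) bdd by (rule cSup_upper)
      show ?thesis
      proof (cases "y = c")
        case True then show ?thesis using y(1) eta by (simp add: S_def)
      next
        case False
        hence "y < c" using yc by simp
        hence "g y \<le> g c + \<eta>" using d y by auto
        moreover have "g a - \<epsilon>*(y-a) \<le> g y" using y(1) by (simp add: S_def)
        moreover have "\<epsilon>*(y-a) \<le> \<epsilon>*(c-a)" using yc assms(2) by (intro mult_left_mono) auto
        ultimately show ?thesis by linarith
      qed
    qed
    hence "g a - \<epsilon>*(c-a) \<le> g c" by (rule field_le_epsilon)
    then show ?thesis using ac cb by (simp add: S_def)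
  qed
  have "c = b"
  proof (rule ccontr)
    assume "c \<noteq> b"
    hence cb': "c < b" using cb by simp
    obtain \<delta> where d: "\<delta> > 0" "\<forall>h. 0 < h \<and> h < \<delta> \<longrightarrow> g c - \<epsilon>*h \<le> g (c+h)"
      using R[of c \<epsilon>] ac cb' assms(2) by auto
    define h where "h = min (\<delta>/2) ((b-c)/2)"
    have h: "0 < h" "h < \<delta>" "c + h \<le> b" using d(1) cb' unfolding h_def min_def by (auto simp: field_simps)
    have "g c - \<epsilon>*h \<le> g (c+h)" using d h by auto
    moreover have "g a - \<epsilon>*(c-a) \<le> g c" using cS by (simp add: S_def)
    ultimately have "c + h \<in> S" using h ac by (auto simp: S_def algebra_simps)
    hence "c + h \<le> c" unfolding c_def using bdd by (rule cSup_upper)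
    then show False using h by simp
  qed
  then show ?thesis using cS by (simp add: S_def)
qed

lemma dini_mono:
  fixes g :: "real \<Rightarrow> real"
  assumes "a \<le> b"
  and R: "\<And>x e. x \<in> {a..<b} \<Longrightarrow> e > 0 \<Longrightarrow> \<exists>\<delta>>0. \<forall>h. 0 < h \<and> h < \<delta> \<longrightarrow> g x - e*h \<le> g (x+h)"
  and L: "\<And>x e. x \<in> {a<..b} \<Longrightarrow> e > 0 \<Longrightarrow> \<exists>\<delta>>0. \<forall>y. x - \<delta> < y \<and> y < x \<longrightarrow> g y \<le> g x + e"
  shows "g a \<le> g b"
proof (rule field_le_epsilon)
  fix e :: real assume e: "e > 0"
  define \<epsilon> where "\<epsilon> = e / (b - a + 1)"
  have ep: "\<epsilon> > 0" using e assms(1) by (simp add: \<epsilon>_def)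
  have "g a - \<epsilon> * (b - a) \<le> g b" by (rule dini_mono_aux[OF assms(1) ep R L]) auto
  moreover have "\<epsilon> * (b - a) \<le> e"
  proof -
    have "\<epsilon> * (b - a + 1) = e" using assms(1) by (simp add: \<epsilon>_def)
    thus ?thesis using ep by (simp add: algebra_simps)
  qed
  ultimately show "g a \<le> g b + e" by linarith
qed

lemma rderiv_dini:
  fixes g :: "real \<Rightarrow> real"
  assumes "(g has_real_derivative D) (at x within {x..})" "e > 0"
  shows "\<exists>\<delta>>0. \<forall>h. 0 < h \<and> h < \<delta> \<longrightarrow> \<bar>g (x+h) - g x - D*h\<bar> \<le> e*h"
proof -
  have "((\<lambda>y. (g y - g x) / (y - x)) \<longlongrightarrow> D) (at x within {x..})"
    using assms(1) by (simp add: has_field_derivative_iff)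
  hence "eventually (\<lambda>y. dist ((g y - g x) / (y - x)) D < e) (at x within {x..})"
    using assms(2) by (rule tendstoD)
  then obtain d where d: "d > 0" "\<And>y. y \<in> {x..} \<Longrightarrow> y \<noteq> x \<Longrightarrow> dist y x < d \<Longrightarrow> dist ((g y - g x) / (y - x)) D < e"
    unfolding eventually_at by blast
  show ?thesis
  proof (intro exI[of _ d] conjI allI impI)
    fix h :: real assume h: "0 < h \<and> h < d"
    have "dist ((g (x+h) - g x) / (x + h - x)) D < e" using d(2)[of "x+h"] h by (auto simp: dist_real_def)
    hence "\<bar>(g (x+h) - g x) / h - D\<bar> < e" by (simp add: dist_real_def)
    hence "\<bar>((g (x+h) - g x) / h - D) * h\<bar> \<le> e * h" using h by (simp add: abs_mult)
    moreover have "((g (x+h) - g x) / h - D) * h = g (x+h) - g x - D*h" using h by (simp add: field_simps)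
    ultimately show "\<bar>g (x+h) - g x - D*h\<bar> \<le> e*h" by simp
  qed (use d in auto)
qed

lemma cont_left_usc:
  fixes g :: "real \<Rightarrow> real"
  assumes "continuous_on {a..b} g" "x \<in> {a<..b}" "e > 0"
  shows "\<exists>\<delta>>0. \<forall>y. x - \<delta> < y \<and> y < x \<longrightarrow> g y \<le> g x + e"
proof -
  have xab: "x \<in> {a..b}" using assms(2) by auto
  obtain d where d: "d > 0" "\<And>y. y \<in> {a..b} \<Longrightarrow> dist y x < d \<Longrightarrow> dist (g y) (g x) < e"
    using assms(1) xab assms(3) unfolding continuous_on_iff by blast
  show ?thesis
  proof (intro exI[of _ "min d (x - a)"] conjI allI impI)
    fix y assume y: "x - min d (x - a) < y \<and> y < x"
    hence "y \<in> {a..b}" "dist y x < d" using xab by (auto simp: dist_real_def)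
    hence "dist (g y) (g x) < e" by (rule d(2))
    then show "g y \<le> g x + e" by (simp add: dist_real_def)
  qed (use d assms(2) in auto)
qed

lemma rderiv_mono:
  fixes g :: "real \<Rightarrow> real"
  assumes "a \<le> b" "continuous_on {a..b} g"
    and "\<And>x. x \<in> {a..<b} \<Longrightarrow> \<exists>D\<ge>0. (g has_real_derivative D) (at x within {x..})"
  shows "g a \<le> g b"
proof (rule dini_mono[OF assms(1)])
  fix x e :: real assume x: "x \<in> {a..<b}" and e: "e > 0"
  obtain D where D: "D \<ge> 0" "(g has_real_derivative D) (at x within {x..})" using assms(3)[OF x] by blast
  obtain \<delta> where d: "\<delta> > 0" "\<forall>h. 0 < h \<and> h < \<delta> \<longrightarrow> \<bar>g (x+h) - g x - D*h\<bar> \<le> e*h"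
    using rderiv_dini[OF D(2) e] by blast
  show "\<exists>\<delta>>0. \<forall>h. 0 < h \<and> h < \<delta> \<longrightarrow> g x - e*h \<le> g (x+h)"
  proof (intro exI[of _ \<delta>] conjI allI impI)
    fix h assume h: "0 < h \<and> h < \<delta>"
    have "\<bar>g (x+h) - g x - D*h\<bar> \<le> e*h" using d h by blast
    moreover have "D*h \<ge> 0" using D h by simp
    ultimately show "g x - e*h \<le> g (x+h)" by linarith
  qed (use d in auto)
next
  fix x e :: real assume "x \<in> {a<..b}" "e > 0"
  then show "\<exists>\<delta>>0. \<forall>y. x - \<delta> < y \<and> y < x \<longrightarrow> g y \<le> g x + e"
    by (rule cont_left_usc[OF assms(2)])
qed

lemma powr_neg_deriv:
  fixes t c :: real
  assumes "t > 0"
  shows "((\<lambda>u. u powr (-c)) has_real_derivative (-c) * t powr (-c) / t) (at t within S)"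
proof -
  have "((\<lambda>u. u powr (-c)) has_real_derivative (-c) * t powr (-c - 1)) (at t)"
    using has_real_derivative_powr[OF assms, of "-c"] by simp
  moreover have "t powr (-c - 1) = t powr (-c) / t" using assms by (simp add: powr_diff)
  ultimately show ?thesis by (auto intro: has_field_derivative_at_within)
qed

lemma cmp_upper:
  fixes T V \<alpha> :: "real \<Rightarrow> real"
  assumes "0 < a" "a \<le> b"
    and cT: "continuous_on {a..b} T" and cV: "continuous_on {a..b} V"
    and dV: "\<And>t. t \<in> {a..<b} \<Longrightarrow> (V has_real_derivative (\<alpha> t + c / t * V t)) (at t within {t..})"
    and dT: "\<And>t. t \<in> {a..<b} \<Longrightarrow> \<exists>D. (T has_real_derivative D) (at t within {t..}) \<and> D \<le> \<alpha> t + c / t * T t"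
  shows "b powr (-c) * (T b - V b) \<le> a powr (-c) * (T a - V a)"
proof -
  define g where "g = (\<lambda>t. - (t powr (-c) * (T t - V t)))"
  have "g a \<le> g b"
  proof (rule rderiv_mono[OF assms(2)])
    show "continuous_on {a..b} g" unfolding g_def using assms(1)
      by (intro continuous_intros cT cV) auto
  next
    fix t assume t: "t \<in> {a..<b}"
    hence tp: "t > 0" using assms(1) by auto
    obtain D where D: "(T has_real_derivative D) (at t within {t..})" "D \<le> \<alpha> t + c / t * T t"
      using dT[OF t] by blast
    define p where "p = t powr (-c)"
    have pp: "p > 0" using tp by (simp add: p_def)
    have "((\<lambda>u. u powr (-c) * (T u - V u)) has_real_derivative ((-c) * p / t * (T t - V t) + (D - (\<alpha> t + c / t * V t)) * p)) (at t within {t..})"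
      unfolding p_def by (rule DERIV_mult[OF powr_neg_deriv[OF tp] DERIV_diff[OF D(1) dV[OF t]]])
    hence "(g has_real_derivative - ((-c) * p / t * (T t - V t) + p * (D - (\<alpha> t + c / t * V t)))) (at t within {t..})"
      unfolding g_def by (auto dest: DERIV_minus simp: algebra_simps)
    moreover have "- ((-c) * p / t * (T t - V t) + p * (D - (\<alpha> t + c / t * V t))) \<ge> 0"
    proof -
      have "p * (D - (\<alpha> t + c / t * V t)) \<le> p * (c / t * T t - c / t * V t)"
        using D(2) pp by (intro mult_left_mono) auto
      also have "\<dots> = c * p / t * (T t - V t)" using tp by (simp add: field_simps)
      finally show ?thesis by simp
    qed
    ultimately show "\<exists>D\<ge>0. (g has_real_derivative D) (at t within {t..})" by blast
  qed
  then show ?thesis by (simp add: g_def)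
qed

lemma cmp_lower:
  fixes F V \<alpha> :: "real \<Rightarrow> real"
  assumes "0 < a" "a \<le> b"
    and cV: "continuous_on {a..b} V"
    and dV: "\<And>t. t \<in> {a..<b} \<Longrightarrow> (V has_real_derivative (\<alpha> t + c / t * V t)) (at t within {t..})"
    and Fmono: "\<And>s t. a \<le> s \<Longrightarrow> s \<le> t \<Longrightarrow> t \<le> b \<Longrightarrow> F s \<le> F t"
    and Fnn: "\<And>t. t \<in> {a..b} \<Longrightarrow> F t \<ge> 0"
    and dF: "\<And>t e. t \<in> {a..<b} \<Longrightarrow> e > 0 \<Longrightarrow> \<exists>T D. (T has_real_derivative D) (at t within {t..}) \<and>
             D \<ge> \<alpha> t + c / t * F t - e \<and> (\<forall>h>0. t + h \<le> b \<longrightarrow> F (t+h) - F t \<ge> T (t+h) - T t)"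
  shows "a powr (-c) * (F a - V a) \<le> b powr (-c) * (F b - V b)"
proof -
  define g where "g = (\<lambda>t. t powr (-c) * (F t - V t))"
  have "g a \<le> g b"
  proof (rule dini_mono[OF assms(2)])
    fix x e :: real assume x: "x \<in> {a..<b}" and e: "e > 0"
    hence xp: "x > 0" using assms(1) by auto
    define p where "p = x powr (-c)"
    have pp: "p > 0" using xp by (simp add: p_def)
    obtain T D where TD: "(T has_real_derivative D) (at x within {x..})"
      "D \<ge> \<alpha> x + c / x * F x - e / (2*p)" "\<forall>h>0. x + h \<le> b \<longrightarrow> F (x+h) - F x \<ge> T (x+h) - T x"
      using dF[OF x, of "e/(2*p)"] e pp by auto
    define \<phi> where "\<phi> = (\<lambda>u. u powr (-c) * (F x + T u - T x - V u))"
    define D\<phi> where "D\<phi> = (-c) * p / x * (F x - V x) + p * (D - (\<alpha> x + c / x * V x))"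
    have dd: "((\<lambda>u. F x + T u - T x - V u) has_real_derivative (0 + D - 0 - (\<alpha> x + c / x * V x))) (at x within {x..})"
      by (intro DERIV_diff DERIV_add DERIV_const TD(1) dV[OF x])
    have d\<phi>: "(\<phi> has_real_derivative D\<phi>) (at x within {x..})"
      using DERIV_mult[OF powr_neg_deriv[OF xp] dd] unfolding \<phi>_def D\<phi>_def p_def by (simp add: algebra_simps)
    have "c * p / x * (F x - V x) - e / 2 = p * (c / x * F x - e / (2*p) - c / x * V x)" using pp xp by (simp add: field_simps)
    also have "\<dots> \<le> p * (D - (\<alpha> x + c / x * V x))"
      using TD(2) pp by (intro mult_left_mono) auto
    finally have Dge: "D\<phi> \<ge> - e / 2" unfolding D\<phi>_def by (simp add: algebra_simps)
    obtain \<delta> where d: "\<delta> > 0" "\<forall>h. 0 < h \<and> h < \<delta> \<longrightarrow> \<bar>\<phi> (x+h) - \<phi> x - D\<phi>*h\<bar> \<le> e/2*h"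
      using rderiv_dini[OF d\<phi>, of "e/2"] e by auto
    show "\<exists>\<delta>>0. \<forall>h. 0 < h \<and> h < \<delta> \<longrightarrow> g x - e*h \<le> g (x+h)"
    proof (intro exI[of _ "min \<delta> (b - x)"] conjI allI impI)
      fix h assume h: "0 < h \<and> h < min \<delta> (b - x)"
      have "\<bar>\<phi> (x+h) - \<phi> x - D\<phi>*h\<bar> \<le> e/2*h" using d h by auto
      moreover have "D\<phi>*h \<ge> -e/2*h" using mult_right_mono[OF Dge, of h] h by simp
      moreover have "\<phi> x = g x" by (simp add: \<phi>_def g_def)
      moreover have "\<phi> (x+h) \<le> g (x+h)"
      proof -
        have "F x + T (x+h) - T x \<le> F (x+h)" using TD(3) h by auto
        hence "F x + T (x+h) - T x - V (x+h) \<le> F (x+h) - V (x+h)" by simp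
        thus ?thesis unfolding \<phi>_def g_def by (intro mult_left_mono) auto
      qed
      ultimately show "g x - e*h \<le> g (x+h)" by linarith
    qed (use d x in auto)
  next
    fix x e :: real assume x: "x \<in> {a<..b}" and e: "e > 0"
    define k where "k = (\<lambda>y. y powr (-c) * F x - y powr (-c) * V y)"
    have ck: "continuous_on {a..b} k" unfolding k_def using assms(1)
      by (intro continuous_intros cV) auto
    obtain \<delta> where d: "\<delta> > 0" "\<forall>y. x - \<delta> < y \<and> y < x \<longrightarrow> k y \<le> k x + e"
      using cont_left_usc[OF ck x e] by blast
    show "\<exists>\<delta>>0. \<forall>y. x - \<delta> < y \<and> y < x \<longrightarrow> g y \<le> g x + e"
    proof (intro exI[of _ "min \<delta> (x - a)"] conjI allI impI)
      fix y assume y: "x - min \<delta> (x - a) < y \<and> y < x"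
      have "g y \<le> k y"
      proof -
        have "F y \<le> F x" using y x by (intro Fmono) auto
        hence "y powr (-c) * F y \<le> y powr (-c) * F x" by (intro mult_left_mono) auto
        thus ?thesis by (simp add: g_def k_def algebra_simps)
      qed
      moreover have "k y \<le> k x + e" using d y by auto
      moreover have "k x = g x" by (simp add: k_def g_def algebra_simps)
      ultimately show "g y \<le> g x + e" by simp
    qed (use d x in auto)
  qed
  then show ?thesis by (simp add: g_def)
qed


locale YS =
  fixes M :: "'a measure" and Y :: "real \<Rightarrow> 'a \<Rightarrow> nat" and \<rho> :: real
  assumes rho_pos: "\<rho> > 0" and ysp: "yule_simon_process M Y \<rho>"
begin

lemma pbp: "pure_birth_process M Y (yule_simon_rate \<rho>)"
  using ysp by (simp add: yule_simon_process_def)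

sublocale prob_space M using pbp by (simp add: pure_birth_process_def)

abbreviation "a \<equiv> yule_simon_rate \<rho>"

lemma Ymeas: "t \<in> {0..1} \<Longrightarrow> Y t \<in> measurable M (count_space UNIV)"
  using pbp by (simp add: pure_birth_process_def)

lemma Y0: "AE \<omega> in M. Y 0 \<omega> = 0"
  using pbp by (simp add: pure_birth_process_def)

lemma Ymono: "0 \<le> s \<Longrightarrow> s \<le> t \<Longrightarrow> t \<le> 1 \<Longrightarrow> AE \<omega> in M. Y s \<omega> \<le> Y t \<omega>"
  using pbp by (simp add: pure_birth_process_def)

lemma Ycont: "t \<in> {0..1} \<Longrightarrow> ((\<lambda>u. measure M {\<omega>\<in>space M. Y u \<omega> \<noteq> Y t \<omega>}) \<longlongrightarrow> 0) (at t within {0..1})"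
  using pbp by (simp add: pure_birth_process_def)

lemma Ymarkov:
  assumes "0 \<le> s 0" "\<forall>i<n. s i < s (Suc i)" "s n < t" "t \<le> 1"
    "measure M {\<omega>\<in>space M. \<forall>i\<le>n. Y (s i) \<omega> = j i} > 0"
  shows "cond_prob M {\<omega>\<in>space M. Y t \<omega> = k} {\<omega>\<in>space M. \<forall>i\<le>n. Y (s i) \<omega> = j i}
          = cond_prob M {\<omega>\<in>space M. Y t \<omega> = k} {\<omega>\<in>space M. Y (s n) \<omega> = j n}"
  using pbp assms unfolding pure_birth_process_def by blast

lemma Yrate:
  assumes "0 \<le> t" "t < 1" "measure M {\<omega>\<in>space M. Y t \<omega> = k} > 0"
  shows "((\<lambda>h. cond_prob M {\<omega>\<in>space M. Y (t + h) \<omega> = Suc k} {\<omega>\<in>space M. Y t \<omega> = k} / h)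
           \<longlongrightarrow> a k t) (at_right 0)"
    "((\<lambda>h. (1 - cond_prob M {\<omega>\<in>space M. Y (t + h) \<omega> = k} {\<omega>\<in>space M. Y t \<omega> = k}) / h)
           \<longlongrightarrow> a k t) (at_right 0)"
  using pbp assms unfolding pure_birth_process_def by blast+

lemma sets_Y: "t \<in> {0..1} \<Longrightarrow> {\<omega>\<in>space M. P (Y t \<omega>)} \<in> sets M"
  using measurable_sets[OF Ymeas, of t "{j. P j}"] by (simp add: vimage_def Int_def conj_commute)

lemma sets_Y2:
  assumes "t \<in> {0..1}" "u \<in> {0..1}"
  shows "{\<omega>\<in>space M. P (Y t \<omega>) (Y u \<omega>)} \<in> sets M"
proof -
  have "{\<omega>\<in>space M. P (Y t \<omega>) (Y u \<omega>)} = (\<Union>i. {\<omega>\<in>space M. Y t \<omega> = i} \<inter> {\<omega>\<in>space M. P i (Y u \<omega>)})"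
    by auto
  also have "\<dots> \<in> sets M"
  proof -
    have "{\<omega>\<in>space M. Y t \<omega> = i} \<in> sets M" for i using sets_Y[of t "\<lambda>j. j = i"] assms by simp
    moreover have "{\<omega>\<in>space M. P i (Y u \<omega>)} \<in> sets M" for i using sets_Y[of u "\<lambda>j. P i j"] assms by simp
    ultimately show ?thesis by auto
  qed
  finally show ?thesis .
qed

lemma sets_BY: "B \<in> sets M \<Longrightarrow> t \<in> {0..1} \<Longrightarrow> {\<omega>\<in>space M. \<omega> \<in> B \<and> P (Y t \<omega>)} \<in> sets M"
proof -
  assume "B \<in> sets M" "t \<in> {0..1}"
  moreover have "{\<omega>\<in>space M. \<omega> \<in> B \<and> P (Y t \<omega>)} = B \<inter> {\<omega>\<in>space M. P (Y t \<omega>)}" by auto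
  ultimately show ?thesis using sets_Y by auto
qed

lemma sets_BY2: "B \<in> sets M \<Longrightarrow> t \<in> {0..1} \<Longrightarrow> u \<in> {0..1} \<Longrightarrow> {\<omega>\<in>space M. \<omega> \<in> B \<and> P (Y t \<omega>) (Y u \<omega>)} \<in> sets M"
proof -
  assume "B \<in> sets M" "t \<in> {0..1}" "u \<in> {0..1}"
  moreover have "{\<omega>\<in>space M. \<omega> \<in> B \<and> P (Y t \<omega>) (Y u \<omega>)} = B \<inter> {\<omega>\<in>space M. P (Y t \<omega>) (Y u \<omega>)}" by auto
  ultimately show ?thesis using sets_Y2 by auto
qed

lemma measure_split_AE:
  assumes "A \<in> sets M" "A1 \<in> sets M" "A2 \<in> sets M" "A1 \<inter> A2 = {}" "A1 \<union> A2 \<subseteq> A"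
    "AE \<omega> in M. \<omega> \<in> A \<longrightarrow> \<omega> \<in> A1 \<union> A2"
  shows "measure M A = measure M A1 + measure M A2"
proof -
  have "measure M A = measure M (A1 \<union> A2)"
    using assms by (intro measure_eq_AE) auto
  also have "\<dots> = measure M A1 + measure M A2" using assms by (intro finite_measure_Union) auto
  finally show ?thesis .
qed

definition q :: "'a set \<Rightarrow> real \<Rightarrow> nat \<Rightarrow> real" where
  "q B t j = measure M {\<omega>\<in>space M. \<omega> \<in> B \<and> Y t \<omega> = j}"

definition G :: "'a set \<Rightarrow> real \<Rightarrow> nat \<Rightarrow> real" where
  "G B t k = measure M {\<omega>\<in>space M. \<omega> \<in> B \<and> k \<le> Y t \<omega>}"

definition cp :: "real \<Rightarrow> real \<Rightarrow> nat \<Rightarrow> nat \<Rightarrow> real" where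
  "cp t h i j = cond_prob M {\<omega>\<in>space M. Y (t + h) \<omega> = j} {\<omega>\<in>space M. Y t \<omega> = i}"

definition FAC :: "'a set \<Rightarrow> real \<Rightarrow> bool" where
  "FAC B t0 \<longleftrightarrow> (\<forall>t h i j. t0 \<le> t \<longrightarrow> t < 1 \<longrightarrow> 0 < h \<longrightarrow> t + h \<le> 1 \<longrightarrow>
     measure M {\<omega>\<in>space M. \<omega> \<in> B \<and> Y t \<omega> = i \<and> Y (t+h) \<omega> = j} = q B t i * cp t h i j)"

lemma q_le: "B \<in> sets M \<Longrightarrow> t \<in> {0..1} \<Longrightarrow> q B t j \<le> measure M {\<omega>\<in>space M. Y t \<omega> = j}"
  unfolding q_def by (intro finite_measure_mono sets_Y) auto

end


context YS begin

lemma ev_small: "t < 1 \<Longrightarrow> eventually (\<lambda>h. 0 < h \<and> t + h \<le> 1) (at_right (0::real))"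
  unfolding eventually_at_right_field by (intro exI[of _ "1 - t"]) auto

lemma r_top:
  assumes B: "B \<in> sets M" and F: "FAC B t0" and t: "0 \<le> t0" "t0 \<le> t" "t < 1" and h: "0 < h" "t + h \<le> 1"
  shows "measure M {\<omega>\<in>space M. \<omega> \<in> B \<and> Y t \<omega> = j \<and> Suc j \<le> Y (t+h) \<omega>} = q B t j * (1 - cp t h j j)"
proof -
  have t01: "t \<in> {0..1}" "t + h \<in> {0..1}" using t h by auto
  have "q B t j = measure M {\<omega>\<in>space M. \<omega> \<in> B \<and> Y t \<omega> = j \<and> Y (t+h) \<omega> = j}
                 + measure M {\<omega>\<in>space M. \<omega> \<in> B \<and> Y t \<omega> = j \<and> Suc j \<le> Y (t+h) \<omega>}"
    unfolding q_def
  proof (rule measure_split_AE)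
    show "AE \<omega> in M. \<omega> \<in> {\<omega>\<in>space M. \<omega> \<in> B \<and> Y t \<omega> = j} \<longrightarrow>
        \<omega> \<in> {\<omega>\<in>space M. \<omega> \<in> B \<and> Y t \<omega> = j \<and> Y (t+h) \<omega> = j} \<union> {\<omega>\<in>space M. \<omega> \<in> B \<and> Y t \<omega> = j \<and> Suc j \<le> Y (t+h) \<omega>}"
    proof -
      have "AE \<omega> in M. Y t \<omega> \<le> Y (t+h) \<omega>" using Ymono[of t "t+h"] t h by auto
      then show ?thesis by eventually_elim auto
    qed
  qed (use B t01 in \<open>auto intro!: sets_BY sets_BY2\<close>)
  moreover have "measure M {\<omega>\<in>space M. \<omega> \<in> B \<and> Y t \<omega> = j \<and> Y (t+h) \<omega> = j} = q B t j * cp t h j j"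
    using F t h unfolding FAC_def by blast
  ultimately show ?thesis by (simp add: algebra_simps)
qed

lemma r_low:
  assumes B: "B \<in> sets M" and F: "FAC B t0" and t: "0 \<le> t0" "t0 \<le> t" "t < 1" and h: "0 < h" "t + h \<le> 1"
  shows "measure M {\<omega>\<in>space M. \<omega> \<in> B \<and> Y t \<omega> = j \<and> Suc (Suc j) \<le> Y (t+h) \<omega>}
         = q B t j * (1 - cp t h j j - cp t h j (Suc j))"
proof -
  have t01: "t \<in> {0..1}" "t + h \<in> {0..1}" using t h by auto
  have "measure M {\<omega>\<in>space M. \<omega> \<in> B \<and> Y t \<omega> = j \<and> Suc j \<le> Y (t+h) \<omega>} =
        measure M {\<omega>\<in>space M. \<omega> \<in> B \<and> Y t \<omega> = j \<and> Y (t+h) \<omega> = Suc j}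
        + measure M {\<omega>\<in>space M. \<omega> \<in> B \<and> Y t \<omega> = j \<and> Suc (Suc j) \<le> Y (t+h) \<omega>}"
    by (rule measure_split_AE) (use B t01 in \<open>auto intro!: sets_BY2\<close>)
  moreover have "measure M {\<omega>\<in>space M. \<omega> \<in> B \<and> Y t \<omega> = j \<and> Y (t+h) \<omega> = Suc j} = q B t j * cp t h j (Suc j)"
    using F t h unfolding FAC_def by blast
  moreover note r_top[OF assms, of j]
  ultimately show ?thesis by (simp add: algebra_simps)
qed

lemma G_diff:
  assumes B: "B \<in> sets M" and t: "0 \<le> t" and h: "0 < h" "t + h \<le> 1"
  shows "G B (t+h) k - G B t k = (\<Sum>j<k. measure M {\<omega>\<in>space M. \<omega> \<in> B \<and> Y t \<omega> = j \<and> k \<le> Y (t+h) \<omega>})"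
proof -
  have t01: "t \<in> {0..1}" "t + h \<in> {0..1}" using t h by auto
  have "G B (t+h) k = measure M {\<omega>\<in>space M. \<omega> \<in> B \<and> k \<le> Y t \<omega> \<and> k \<le> Y (t+h) \<omega>}
        + measure M {\<omega>\<in>space M. \<omega> \<in> B \<and> Y t \<omega> < k \<and> k \<le> Y (t+h) \<omega>}"
    unfolding G_def by (rule measure_split_AE) (use B t01 in \<open>auto intro!: sets_BY sets_BY2\<close>)
  moreover have "measure M {\<omega>\<in>space M. \<omega> \<in> B \<and> k \<le> Y t \<omega> \<and> k \<le> Y (t+h) \<omega>} = G B t k"
    unfolding G_def
  proof (rule measure_eq_AE)
    show "AE x in M. (x \<in> {\<omega>\<in>space M. \<omega> \<in> B \<and> k \<le> Y t \<omega> \<and> k \<le> Y (t+h) \<omega>}) = (x \<in> {\<omega>\<in>space M. \<omega> \<in> B \<and> k \<le> Y t \<omega>})"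
    proof -
      have "AE \<omega> in M. Y t \<omega> \<le> Y (t+h) \<omega>" using Ymono[of t "t+h"] t h by auto
      then show ?thesis by eventually_elim auto
    qed
  qed (use B t01 in \<open>auto intro!: sets_BY sets_BY2\<close>)
  moreover have "measure M {\<omega>\<in>space M. \<omega> \<in> B \<and> Y t \<omega> < k \<and> k \<le> Y (t+h) \<omega>}
     = (\<Sum>j<k. measure M {\<omega>\<in>space M. \<omega> \<in> B \<and> Y t \<omega> = j \<and> k \<le> Y (t+h) \<omega>})"
  proof -
    have "{\<omega>\<in>space M. \<omega> \<in> B \<and> Y t \<omega> < k \<and> k \<le> Y (t+h) \<omega>} = (\<Union>j\<in>{..<k}. {\<omega>\<in>space M. \<omega> \<in> B \<and> Y t \<omega> = j \<and> k \<le> Y (t+h) \<omega>})"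
      by auto
    also have "measure M \<dots> = (\<Sum>j<k. measure M {\<omega>\<in>space M. \<omega> \<in> B \<and> Y t \<omega> = j \<and> k \<le> Y (t+h) \<omega>})"
      by (rule finite_measure_finite_Union) (use B t01 in \<open>auto intro!: sets_BY2 simp: disjoint_family_on_def\<close>)
    finally show ?thesis .
  qed
  ultimately show ?thesis by simp
qed

lemma q_zero_if:
  assumes "B \<in> sets M" "t \<in> {0..1}" "\<not> measure M {\<omega>\<in>space M. Y t \<omega> = j} > 0"
  shows "q B t j = 0"
proof -
  have "q B t j \<le> measure M {\<omega>\<in>space M. Y t \<omega> = j}" using q_le assms by blast
  moreover have "q B t j \<ge> 0" by (simp add: q_def)
  ultimately show ?thesis using assms(3) by simp
qed

lemma G_deriv:
  assumes B: "B \<in> sets M" and F: "FAC B t0" and t: "0 \<le> t0" "t0 \<le> t" "t < 1"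
  shows "((\<lambda>u. G B u (Suc k)) has_real_derivative (a k t * q B t k)) (at t within {t..})"
proof -
  have t01: "t \<in> {0..1}" using t by auto
  define r where "r j h = measure M {\<omega>\<in>space M. \<omega> \<in> B \<and> Y t \<omega> = j \<and> Suc k \<le> Y (t+h) \<omega>}" for j h
  have lim: "((\<lambda>h. r j h / h) \<longlongrightarrow> (if j = k then a k t * q B t k else 0)) (at_right 0)" if j: "j < Suc k" for j
  proof (cases "j = k")
    case True
    have ev: "eventually (\<lambda>h. q B t k * ((1 - cp t h k k) / h) = r j h / h) (at_right 0)"
      using ev_small[OF t(3)] by eventually_elim (use r_top[OF B F t] True in \<open>auto simp: r_def\<close>)
    show ?thesis
    proof (cases "measure M {\<omega>\<in>space M. Y t \<omega> = k} > 0")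
      case True
      have "((\<lambda>h. q B t k * ((1 - cp t h k k) / h)) \<longlongrightarrow> q B t k * a k t) (at_right 0)"
        using Yrate(2)[OF _ t(3) True] t unfolding cp_def by (intro tendsto_mult_left) auto
      hence "((\<lambda>h. r j h / h) \<longlongrightarrow> q B t k * a k t) (at_right 0)" using tendsto_cong[OF ev] by blast
      then show ?thesis using \<open>j = k\<close> by (simp add: mult.commute)
    next
      case False
      hence "q B t k = 0" using q_zero_if B t01 by blast
      hence "((\<lambda>h. q B t k * ((1 - cp t h k k) / h)) \<longlongrightarrow> 0) (at_right 0)" by simp
      hence "((\<lambda>h. r j h / h) \<longlongrightarrow> 0) (at_right 0)" using tendsto_cong[OF ev] by blast
      then show ?thesis using \<open>j = k\<close> \<open>q B t k = 0\<close> by simp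
    qed
  next
    case False
    hence jk: "j < k" using j by simp
    have ev1: "eventually (\<lambda>h. 0 \<le> r j h / h) (at_right 0)"
      using ev_small[OF t(3)] by eventually_elim (auto simp: r_def)
    have ev2: "eventually (\<lambda>h. r j h / h \<le> q B t j * ((1 - cp t h j j) / h - cp t h j (Suc j) / h)) (at_right 0)"
      using ev_small[OF t(3)]
    proof eventually_elim
      case (elim h)
      hence t1: "t + h \<in> {0..1}" using t by auto
      have "r j h \<le> measure M {\<omega>\<in>space M. \<omega> \<in> B \<and> Y t \<omega> = j \<and> Suc (Suc j) \<le> Y (t+h) \<omega>}"
        unfolding r_def using jk by (intro finite_measure_mono sets_BY2 B t01 t1) auto
      also have "\<dots> = q B t j * (1 - cp t h j j - cp t h j (Suc j))" using r_low[OF B F t] elim by blast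
      finally have "r j h / h \<le> q B t j * (1 - cp t h j j - cp t h j (Suc j)) / h"
        using elim by (simp add: divide_right_mono)
      also have "\<dots> = q B t j * ((1 - cp t h j j) / h - cp t h j (Suc j) / h)"
        using elim by (simp add: field_simps)
      finally show ?case .
    qed
    have lim2: "((\<lambda>h. q B t j * ((1 - cp t h j j) / h - cp t h j (Suc j) / h)) \<longlongrightarrow> 0) (at_right 0)"
    proof (cases "measure M {\<omega>\<in>space M. Y t \<omega> = j} > 0")
      case True
      have "((\<lambda>h. q B t j * ((1 - cp t h j j) / h - cp t h j (Suc j) / h)) \<longlongrightarrow> q B t j * (a j t - a j t)) (at_right 0)"
        using Yrate[OF _ t(3) True] t unfolding cp_def by (intro tendsto_mult_left tendsto_diff) auto
      then show ?thesis by simp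
    next
      case False
      hence "q B t j = 0" using q_zero_if B t01 by blast
      then show ?thesis by simp
    qed
    have "((\<lambda>h. r j h / h) \<longlongrightarrow> 0) (at_right 0)"
      by (rule tendsto_sandwich[OF ev1 ev2 tendsto_const lim2])
    then show ?thesis using False by simp
  qed
  have "((\<lambda>h. \<Sum>j<Suc k. r j h / h) \<longlongrightarrow> (\<Sum>j<Suc k. (if j = k then a k t * q B t k else 0))) (at_right 0)"
    by (rule tendsto_sum) (use lim in auto)
  moreover have "(\<Sum>j<Suc k. (if j = k then a k t * q B t k else 0)) = a k t * q B t k" by simp
  ultimately have L: "((\<lambda>h. \<Sum>j<Suc k. r j h / h) \<longlongrightarrow> a k t * q B t k) (at_right 0)" by simp
  have ev: "eventually (\<lambda>h. (\<Sum>j<Suc k. r j h / h) = (G B (h + t) (Suc k) - G B t (Suc k)) / (h + t - t)) (at_right 0)"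
    using ev_small[OF t(3)]
  proof eventually_elim
    case (elim h)
    have "G B (t+h) (Suc k) - G B t (Suc k) = (\<Sum>j<Suc k. r j h)" unfolding r_def
      by (rule G_diff) (use B t elim in auto)
    then show ?case by (simp add: sum_divide_distrib[symmetric] add.commute)
  qed
  show ?thesis
    unfolding has_field_derivative_iff at_within_Ici_at_right filterlim_at_right_to_0[of _ _ t]
    using tendsto_cong[OF ev] L by simp
qed

end


context YS begin

lemma FAC_space: "FAC (space M) 0"
  unfolding FAC_def
proof (intro allI impI)
  fix t h :: real and i j :: nat
  assume t: "0 \<le> t" "t < 1" "0 < h" "t + h \<le> 1"
  have t01: "t \<in> {0..1}" "t + h \<in> {0..1}" using t by auto
  have eq: "{\<omega>\<in>space M. Y (t+h) \<omega> = j} \<inter> {\<omega>\<in>space M. Y t \<omega> = i} = {\<omega>\<in>space M. \<omega> \<in> space M \<and> Y t \<omega> = i \<and> Y (t+h) \<omega> = j}"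
    by auto
  have qeq: "q (space M) t i = measure M {\<omega>\<in>space M. Y t \<omega> = i}" by (simp add: q_def)
  show "measure M {\<omega>\<in>space M. \<omega> \<in> space M \<and> Y t \<omega> = i \<and> Y (t+h) \<omega> = j} = q (space M) t i * cp t h i j"
  proof (cases "measure M {\<omega>\<in>space M. Y t \<omega> = i} = 0")
    case True
    have "measure M {\<omega>\<in>space M. \<omega> \<in> space M \<and> Y t \<omega> = i \<and> Y (t+h) \<omega> = j} \<le> measure M {\<omega>\<in>space M. Y t \<omega> = i}"
      by (intro finite_measure_mono sets_Y t01) auto
    then show ?thesis using True qeq by (simp add: measure_nonneg antisym)
  next
    case False
    then show ?thesis unfolding qeq cp_def cond_prob_def by (simp add: eq)
  qed
qed

lemma FAC_ev:
  assumes s: "0 \<le> s" "s < 1"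
  shows "FAC {\<omega>\<in>space M. Y s \<omega> = j0} s"
  unfolding FAC_def
proof (intro allI impI)
  fix t h :: real and i j :: nat
  assume t: "s \<le> t" "t < 1" "0 < h" "t + h \<le> 1"
  let ?B = "{\<omega>\<in>space M. Y s \<omega> = j0}"
  have t01: "t \<in> {0..1}" "t + h \<in> {0..1}" "s \<in> {0..1}" using t s by auto
  let ?L = "{\<omega>\<in>space M. \<omega> \<in> ?B \<and> Y t \<omega> = i \<and> Y (t+h) \<omega> = j}"
  show "measure M ?L = q ?B t i * cp t h i j"
  proof (cases "t = s")
    case True
    show ?thesis
    proof (cases "i = j0")
      case True
      have "?L = {\<omega>\<in>space M. \<omega> \<in> space M \<and> Y t \<omega> = i \<and> Y (t+h) \<omega> = j}" using \<open>t = s\<close> True by auto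
      moreover have "q ?B t i = q (space M) t i" using \<open>t = s\<close> True unfolding q_def
        by (intro arg_cong[where f="measure M"]) auto
      ultimately show ?thesis using FAC_space t s unfolding FAC_def by auto
    next
      case False
      have e1: "?L = {}" and e2: "{\<omega>\<in>space M. \<omega> \<in> ?B \<and> Y t \<omega> = i} = {}" using \<open>t = s\<close> False by auto
      show ?thesis unfolding q_def e1 e2 by simp
    qed
  next
    case False
    hence st: "s < t" using t by simp
    define sf where "sf = (\<lambda>n::nat. if n = 0 then s else t)"
    define jf where "jf = (\<lambda>n::nat. if n = 0 then j0 else i)"
    have P: "{\<omega>\<in>space M. \<forall>n\<le>Suc 0. Y (sf n) \<omega> = jf n} = {\<omega>\<in>space M. \<omega> \<in> ?B \<and> Y t \<omega> = i}"
      by (auto simp: sf_def jf_def le_Suc_eq)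
    have qeq: "q ?B t i = measure M {\<omega>\<in>space M. \<omega> \<in> ?B \<and> Y t \<omega> = i}" by (simp add: q_def)
    have Lset: "?L \<in> sets M" using t01 by (intro sets_BY2 sets_Y) auto
    show ?thesis
    proof (cases "measure M {\<omega>\<in>space M. \<omega> \<in> ?B \<and> Y t \<omega> = i} > 0")
      case True
      have "cond_prob M {\<omega>\<in>space M. Y (t+h) \<omega> = j} {\<omega>\<in>space M. \<forall>n\<le>Suc 0. Y (sf n) \<omega> = jf n}
          = cond_prob M {\<omega>\<in>space M. Y (t+h) \<omega> = j} {\<omega>\<in>space M. Y (sf (Suc 0)) \<omega> = jf (Suc 0)}"
        by (rule Ymarkov) (use s st t True P in \<open>auto simp: sf_def jf_def\<close>)
      hence "measure M ({\<omega>\<in>space M. Y (t+h) \<omega> = j} \<inter> {\<omega>\<in>space M. \<omega> \<in> ?B \<and> Y t \<omega> = i}) / measure M {\<omega>\<in>space M. \<omega> \<in> ?B \<and> Y t \<omega> = i}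
          = cp t h i j"
        unfolding P cp_def cond_prob_def by (simp add: sf_def jf_def)
      moreover have "{\<omega>\<in>space M. Y (t+h) \<omega> = j} \<inter> {\<omega>\<in>space M. \<omega> \<in> ?B \<and> Y t \<omega> = i} = ?L" by auto
      ultimately show ?thesis using True unfolding qeq by (simp add: field_simps)
    next
      case False
      have "measure M ?L \<le> measure M {\<omega>\<in>space M. \<omega> \<in> ?B \<and> Y t \<omega> = i}"
        using t01 by (intro finite_measure_mono sets_BY sets_Y) auto
      moreover have z: "measure M {\<omega>\<in>space M. \<omega> \<in> ?B \<and> Y t \<omega> = i} = 0"
        using False measure_nonneg[of M "{\<omega>\<in>space M. \<omega> \<in> ?B \<and> Y t \<omega> = i}"] by linarith
      ultimately have "measure M ?L = 0" using measure_nonneg[of M ?L] by linarith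
      then show ?thesis using z qeq by simp
    qed
  qed
qed

lemma cont_of_bound:
  assumes "\<And>u t. u \<in> {0..1} \<Longrightarrow> t \<in> {0..1} \<Longrightarrow> \<bar>f u - f t\<bar> \<le> measure M {\<omega>\<in>space M. Y u \<omega> \<noteq> Y t \<omega>}"
  shows "continuous_on {0..1} f"
  unfolding continuous_on_def
proof
  fix t :: real assume t: "t \<in> {0..1}"
  have "((\<lambda>u. f u - f t) \<longlongrightarrow> 0) (at t within {0..1})"
  proof (rule Lim_null_comparison[OF _ Ycont[OF t]])
    show "eventually (\<lambda>u. norm (f u - f t) \<le> measure M {\<omega>\<in>space M. Y u \<omega> \<noteq> Y t \<omega>}) (at t within {0..1})"
      using assms t by (auto simp: eventually_at_filter)
  qed
  hence "((\<lambda>u. (f u - f t) + f t) \<longlongrightarrow> 0 + f t) (at t within {0..1})" by (intro tendsto_add) auto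
  then show "(f \<longlongrightarrow> f t) (at t within {0..1})" by simp
qed

lemma meas_bound:
  assumes "A \<in> sets M" "C \<in> sets M" "D \<in> sets M" "A \<subseteq> C \<union> D" "C \<subseteq> A \<union> D"
  shows "\<bar>measure M A - measure M C\<bar> \<le> measure M D"
proof -
  have "measure M A \<le> measure M (C \<union> D)" using assms by (intro finite_measure_mono) auto
  also have "\<dots> \<le> measure M C + measure M D" using assms by (intro measure_Un_le) auto
  finally have 1: "measure M A \<le> measure M C + measure M D" .
  have "measure M C \<le> measure M (A \<union> D)" using assms by (intro finite_measure_mono) auto
  also have "\<dots> \<le> measure M A + measure M D" using assms by (intro measure_Un_le) auto
  finally have 2: "measure M C \<le> measure M A + measure M D" .
  from 1 2 show ?thesis by linarith
qed

lemma G_cont: "B \<in> sets M \<Longrightarrow> continuous_on {0..1} (\<lambda>u. G B u k)"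
  by (rule cont_of_bound, unfold G_def, rule meas_bound) (auto intro!: sets_BY sets_Y2)

lemma q_cont: "B \<in> sets M \<Longrightarrow> continuous_on {0..1} (\<lambda>u. q B u k)"
  by (rule cont_of_bound, unfold q_def, rule meas_bound) (auto intro!: sets_BY sets_Y2)

end


lemma sum_delta_nat:
  fixes f :: "nat \<Rightarrow> real" and n y :: nat
  shows "(\<Sum>j<n. f j * of_bool (y = j)) = (if y < n then f y else 0)"
  by (induction n) (auto simp: less_Suc_eq)

context YS begin

definition E :: "'a set \<Rightarrow> (nat \<Rightarrow> real) \<Rightarrow> real \<Rightarrow> real" where
  "E B \<phi> t = (\<integral>\<omega>. indicator B \<omega> * \<phi> (Y t \<omega>) \<partial>M)"

lemma E_meas:
  fixes \<phi> :: "nat \<Rightarrow> real"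
  assumes "t \<in> {0..1}" "B \<in> sets M"
  shows "(\<lambda>\<omega>. indicator B \<omega> * \<phi> (Y t \<omega>)) \<in> borel_measurable M"
proof -
  have m: "(\<lambda>\<omega>. \<phi> (Y t \<omega>)) \<in> borel_measurable M"
    using measurable_compose[OF Ymeas[OF assms(1)], of \<phi> borel] by simp
  have mi: "(indicator B :: 'a \<Rightarrow> real) \<in> borel_measurable M" using assms(2) by simp
  show ?thesis by (rule borel_measurable_times[OF mi m])
qed

lemma E_int_bdd:
  fixes C :: real and \<phi> :: "nat \<Rightarrow> real"
  assumes "B \<in> sets M" "t \<in> {0..1}" "\<And>y. \<bar>\<phi> y\<bar> \<le> C"
  shows "integrable M (\<lambda>\<omega>. indicator B \<omega> * \<phi> (Y t \<omega>))"
proof (rule integrable_const_bound[where B=C])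
  show "AE x in M. norm (indicator B x * \<phi> (Y t x)) \<le> C"
    using assms(3) by (intro AE_I2) (auto simp: indicator_def abs_mult intro: order_trans[OF _ assms(3)])
qed (use E_meas assms in auto)

lemma E_ind:
  assumes "B \<in> sets M" "t \<in> {0..1}"
  shows "E B (\<lambda>y. of_bool (P y)) t = measure M {\<omega>\<in>space M. \<omega> \<in> B \<and> P (Y t \<omega>)}"
proof -
  have "E B (\<lambda>y. of_bool (P y)) t = (\<integral>\<omega>. indicator {\<omega>\<in>space M. \<omega> \<in> B \<and> P (Y t \<omega>)} \<omega> \<partial>M)"
    unfolding E_def by (intro Bochner_Integration.integral_cong) (auto simp: indicator_def)
  also have "\<dots> = measure M {\<omega>\<in>space M. \<omega> \<in> B \<and> P (Y t \<omega>)}"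
    by (simp add: Int_absorb2 subset_iff)
  finally show ?thesis .
qed

lemma E_q: "B \<in> sets M \<Longrightarrow> t \<in> {0..1} \<Longrightarrow> E B (\<lambda>y. of_bool (y = j)) t = q B t j"
  using E_ind[of B t "\<lambda>y. y = j"] by (simp add: q_def)

lemma E_G: "B \<in> sets M \<Longrightarrow> t \<in> {0..1} \<Longrightarrow> E B (\<lambda>y. of_bool (k \<le> y)) t = G B t k"
  using E_ind[of B t "\<lambda>y. k \<le> y"] by (simp add: G_def)

lemma E_cmult: "E B (\<lambda>y. c * f y) t = c * E B f t"
  unfolding E_def by (simp add: mult.left_commute)

lemma E_sum:
  assumes "\<And>i. i \<in> S \<Longrightarrow> integrable M (\<lambda>\<omega>. indicator B \<omega> * f i (Y t \<omega>))"
  shows "E B (\<lambda>y. \<Sum>i\<in>S. f i y) t = (\<Sum>i\<in>S. E B (f i) t)"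
  unfolding E_def sum_distrib_left by (rule Bochner_Integration.integral_sum) (use assms in auto)

lemma E_mono_t:
  assumes "B \<in> sets M" "0 \<le> t" "t \<le> t'" "t' \<le> 1" "mono \<phi>"
    "integrable M (\<lambda>\<omega>. indicator B \<omega> * \<phi> (Y t \<omega>))" "integrable M (\<lambda>\<omega>. indicator B \<omega> * \<phi> (Y t' \<omega>))"
  shows "E B \<phi> t \<le> E B \<phi> t'"
  unfolding E_def
proof (rule integral_mono_AE[OF assms(6,7)])
  show "AE \<omega> in M. indicator B \<omega> * \<phi> (Y t \<omega>) \<le> indicator B \<omega> * \<phi> (Y t' \<omega>)"
    using Ymono[OF assms(2,3,4)]
    by eventually_elim (auto intro!: mult_left_mono monoD[OF assms(5)])
qed

lemma E_series:
  assumes B: "B \<in> sets M" and t: "t \<in> {0..1}" and nn: "\<And>j. \<phi> j \<ge> 0"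
    and sm: "summable (\<lambda>j. \<phi> j * q B t j)"
  shows "integrable M (\<lambda>\<omega>. indicator B \<omega> * \<phi> (Y t \<omega>))" "E B \<phi> t = (\<Sum>j. \<phi> j * q B t j)"
proof -
  define f where "f n \<omega> = indicator B \<omega> * (\<Sum>j<n. \<phi> j * of_bool (Y t \<omega> = j))" for n \<omega>
  have fi: "integrable M (f n)" for n
    unfolding f_def
    by (rule E_int_bdd[OF B t, of _ "\<Sum>j<n. \<phi> j"]) (auto simp: sum_delta_nat nn intro: member_le_sum sum_nonneg)
  have fE: "integral\<^sup>L M (f n) = (\<Sum>j<n. \<phi> j * q B t j)" for n
  proof -
    have "integral\<^sup>L M (f n) = E B (\<lambda>y. \<Sum>j<n. \<phi> j * of_bool (y = j)) t" unfolding f_def E_def by (rule refl)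
    also have "\<dots> = (\<Sum>j<n. E B (\<lambda>y. \<phi> j * of_bool (y = j)) t)"
      by (rule E_sum, rule E_int_bdd[OF B t, of _ "\<phi> _"]) (auto simp: nn)
    also have "\<dots> = (\<Sum>j<n. \<phi> j * q B t j)" by (simp add: E_cmult E_q[OF B t])
    finally show ?thesis .
  qed
  have mono: "AE x in M. mono (\<lambda>n. f n x)"
    by (intro AE_I2 monoI) (auto simp: f_def sum_delta_nat indicator_def nn)
  have pos: "AE x in M. 0 \<le> f n x" for n
    by (intro AE_I2) (auto simp: f_def sum_delta_nat indicator_def nn)
  have lim: "AE x in M. (\<lambda>n. f n x) \<longlonglongrightarrow> indicator B x * \<phi> (Y t x)"
  proof (intro AE_I2)
    fix x
    have "eventually (\<lambda>n. f n x = indicator B x * \<phi> (Y t x)) sequentially"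
      using eventually_gt_at_top[of "Y t x"] by eventually_elim (simp add: f_def sum_delta_nat)
    then show "(\<lambda>n. f n x) \<longlonglongrightarrow> indicator B x * \<phi> (Y t x)" by (rule tendsto_eventually)
  qed
  have ilim: "(\<lambda>n. integral\<^sup>L M (f n)) \<longlonglongrightarrow> (\<Sum>j. \<phi> j * q B t j)"
    unfolding fE using summable_LIMSEQ[OF sm] .
  note mc = integral_monotone_convergence_nonneg[OF fi mono pos lim ilim E_meas[OF t B]]
  show "integrable M (\<lambda>\<omega>. indicator B \<omega> * \<phi> (Y t \<omega>))" by (rule mc(1))
  show "E B \<phi> t = (\<Sum>j. \<phi> j * q B t j)" unfolding E_def by (rule mc(2))
qed

end


lemma min_sum: "real (min y N) = (\<Sum>k<N. of_bool (Suc k \<le> y))"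
  by (induction N) (auto simp: min_def)

lemma min_sq_sum: "real (min y N) ^ 2 = (\<Sum>k<N. (2 * real k + 1) * of_bool (Suc k \<le> y))"
proof (induction N)
  case (Suc N)
  show ?case
  proof (cases "Suc N \<le> y")
    case True
    hence "min y (Suc N) = Suc N" "min y N = N" by auto
    then show ?thesis using Suc True by (simp add: power2_eq_square algebra_simps)
  next
    case False
    hence "min y (Suc N) = min y N" by auto
    then show ?thesis using Suc False by simp
  qed
qed simp

lemma tendsto_powr_at_right0:
  assumes "r > 0" shows "((\<lambda>x::real. C * x powr r) \<longlongrightarrow> 0) (at_right 0)"
proof -
  have ev: "eventually (\<lambda>x::real. 0 \<le> x) (at_right 0)"
    by (rule eventually_at_rightI[of 0 1]) auto
  have "((\<lambda>x::real. x powr r) \<longlongrightarrow> 0) (at_right 0)"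
    by (rule tendsto_zero_powrI[OF tendsto_ident_at tendsto_const ev assms])
  then show ?thesis by (rule tendsto_mult_right_zero)
qed

lemma limit_le_at_right0:
  fixes x b :: real and g :: "real \<Rightarrow> real"
  assumes "((\<lambda>a. g a) \<longlongrightarrow> 0) (at_right 0)" "\<And>a. 0 < a \<Longrightarrow> a \<le> b \<Longrightarrow> x \<le> g a" "b > 0"
  shows "x \<le> 0"
proof (rule tendsto_le[OF _ assms(1) tendsto_const])
  show "eventually (\<lambda>a. x \<le> g a) (at_right 0)"
    by (rule eventually_at_rightI[of 0 b]) (use assms(2,3) in auto)
qed (fact trivial_limit_at_right_real)

context YS begin

definition T :: "(nat \<Rightarrow> real) \<Rightarrow> nat \<Rightarrow> 'a set \<Rightarrow> real \<Rightarrow> real" where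
  "T c N B t = (\<Sum>k<N. c k * G B t (Suc k))"

lemma T_E: "B \<in> sets M \<Longrightarrow> t \<in> {0..1} \<Longrightarrow> T c N B t = E B (\<lambda>y. \<Sum>k<N. c k * of_bool (Suc k \<le> y)) t"
  unfolding T_def
  by (subst E_sum) (auto intro!: E_int_bdd[of B t _ "\<bar>c _\<bar>"] simp: E_cmult E_G abs_mult)

lemma T_deriv:
  assumes B: "B \<in> sets M" and F: "FAC B t0" and t: "0 \<le> t0" "t0 \<le> t" "t < 1"
  shows "((\<lambda>u. T c N B u) has_real_derivative (\<Sum>k<N. c k * (a k t * q B t k))) (at t within {t..})"
  unfolding T_def by (intro DERIV_sum DERIV_cmult G_deriv[OF B F t])

lemma T_cont: "B \<in> sets M \<Longrightarrow> continuous_on {0..1} (\<lambda>u. T c N B u)"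
  unfolding T_def by (intro continuous_intros G_cont)

lemma rate_sum:
  assumes "t > 0"
  shows "(\<Sum>k<Suc N. c k * (a k t * q B t k)) = c 0 * (a 0 t * q B t 0) + 1 / (\<rho> * t) * (\<Sum>k<Suc N. c k * real k * q B t k)"
proof (induction N)
  case (Suc N)
  have e: "c (Suc N) * (a (Suc N) t * q B t (Suc N)) = 1 / (\<rho> * t) * (c (Suc N) * real (Suc N) * q B t (Suc N))"
    using assms rho_pos by (simp add: yule_simon_rate_def field_simps)
  have "(\<Sum>k<Suc (Suc N). c k * (a k t * q B t k)) = (\<Sum>k<Suc N. c k * (a k t * q B t k)) + c (Suc N) * (a (Suc N) t * q B t (Suc N))"
    by (rule sum.lessThan_Suc)
  also have "\<dots> = c 0 * (a 0 t * q B t 0) + 1 / (\<rho> * t) * ((\<Sum>k<Suc N. c k * real k * q B t k) + c (Suc N) * real (Suc N) * q B t (Suc N))"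
    unfolding Suc.IH e by (simp add: algebra_simps)
  also have "(\<Sum>k<Suc N. c k * real k * q B t k) + c (Suc N) * real (Suc N) * q B t (Suc N) = (\<Sum>k<Suc (Suc N). c k * real k * q B t k)"
    by (rule sum.lessThan_Suc[symmetric])
  finally show ?case .
qed simp

lemma G_mono_t:
  assumes B: "B \<in> sets M" and t: "0 \<le> t" "t \<le> t'" "t' \<le> 1"
  shows "G B t k \<le> G B t' k"
proof -
  have "E B (\<lambda>y. of_bool (k \<le> y)) t \<le> E B (\<lambda>y. of_bool (k \<le> y)) t'"
  proof (rule E_mono_t[OF B t])
    show "mono (\<lambda>y. of_bool (k \<le> y) :: real)" by (rule monoI) auto
  qed (use B t in \<open>auto intro!: E_int_bdd[of _ _ _ 1]\<close>)
  then show ?thesis using E_G[OF B, of t k] E_G[OF B, of t' k] t by simp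
qed

lemma G_split: "B \<in> sets M \<Longrightarrow> t \<in> {0..1} \<Longrightarrow> G B t k = G B t (Suc k) + q B t k"
  unfolding G_def q_def
  by (rule measure_split_AE) (auto intro!: sets_BY)

lemma G_anti_k: "B \<in> sets M \<Longrightarrow> t \<in> {0..1} \<Longrightarrow> k \<le> k' \<Longrightarrow> G B t k' \<le> G B t k"
  unfolding G_def by (intro finite_measure_mono sets_BY) auto

lemma q_nonneg: "q B t k \<ge> 0" by (simp add: q_def)
lemma G_nonneg: "G B t k \<ge> 0" by (simp add: G_def)

lemma T_le: "B \<in> sets M \<Longrightarrow> t \<in> {0..1} \<Longrightarrow> (\<And>k. k < N \<Longrightarrow> 0 \<le> c k) \<Longrightarrow> T c N B t \<le> (\<Sum>k<N. c k) * G B t 1"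
  unfolding T_def sum_distrib_right
  by (intro sum_mono mult_left_mono G_anti_k) auto

abbreviation \<Omega> where "\<Omega> \<equiv> space M"

lemma G1: "t \<in> {0..1} \<Longrightarrow> G \<Omega> t 1 = t"
proof -
  have G0: "G \<Omega> t 0 = 1" for t by (simp add: G_def prob_space)
  have q0: "t \<in> {0..1} \<Longrightarrow> q \<Omega> t 0 = 1 - G \<Omega> t 1" for t using G_split[of \<Omega> t 0] G0 by simp
  have init: "G \<Omega> 0 1 = 0"
  proof -
    have "G \<Omega> 0 1 = measure M {\<omega>\<in>space M. 1 \<le> Y 0 \<omega>}" by (simp add: G_def)
    also have "\<dots> = measure M {}"
    proof (rule measure_eq_AE)
      show "AE \<omega> in M. (\<omega> \<in> {\<omega>\<in>space M. 1 \<le> Y 0 \<omega>}) = (\<omega> \<in> {})"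
        using Y0 by eventually_elim auto
      show "{\<omega>\<in>space M. 1 \<le> Y 0 \<omega>} \<in> sets M" by (rule sets_Y) auto
    qed simp
    finally show ?thesis by simp
  qed
  have lt1: "G \<Omega> b 1 = b" if b: "0 \<le> b" "b < 1" for b
  proof -
    define f where "f t = (1 - G \<Omega> t (Suc 0)) / (1 - t)" for t
    have cf: "continuous_on {0..b} f" unfolding f_def using b
      by (intro continuous_intros continuous_on_subset[OF G_cont[of \<Omega> "Suc 0"]]) auto
    have df: "(f has_real_derivative 0) (at t within {t..})" if t: "t \<in> {0..<b}" for t
    proof -
      have t1: "0 \<le> t" "t < 1" using t b by auto
      have dG: "((\<lambda>u. G \<Omega> u (Suc 0)) has_real_derivative (a 0 t * q \<Omega> t 0)) (at t within {t..})"
        by (rule G_deriv[OF _ FAC_space]) (use t1 in auto)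
      have d1: "((\<lambda>u. 1 - G \<Omega> u (Suc 0)) has_real_derivative (0 - a 0 t * q \<Omega> t 0)) (at t within {t..})"
        by (rule DERIV_diff[OF DERIV_const dG])
      have d2: "((\<lambda>u. 1 - u) has_real_derivative (0 - 1)) (at t within {t..})"
        by (rule DERIV_diff[OF DERIV_const DERIV_ident])
      have "(f has_real_derivative ((0 - a 0 t * q \<Omega> t 0) * (1 - t) - (1 - G \<Omega> t (Suc 0)) * (0 - 1)) / ((1 - t) * (1 - t))) (at t within {t..})"
        unfolding f_def by (rule DERIV_divide[OF d1 d2]) (use t1 in auto)
      moreover have "(0 - a 0 t * q \<Omega> t 0) * (1 - t) - (1 - G \<Omega> t (Suc 0)) * (0 - 1) = 0"
        using q0[of t] t1 by (simp add: yule_simon_rate_def)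
      ultimately show ?thesis by simp
    qed
    have "f 0 \<le> f b" by (rule rderiv_mono[OF b(1) cf]) (use df in auto)
    moreover have "(\<lambda>t. - f t) 0 \<le> (\<lambda>t. - f t) b"
    proof (rule rderiv_mono[OF b(1)])
      show "continuous_on {0..b} (\<lambda>t. - f t)" using cf by (intro continuous_intros)
      fix x assume "x \<in> {0..<b}"
      from DERIV_minus[OF df[OF this]] show "\<exists>D\<ge>0. ((\<lambda>t. - f t) has_real_derivative D) (at x within {x..})" by auto
    qed
    ultimately have "f b = f 0" by simp
    then show ?thesis using b init by (simp add: f_def field_simps)
  qed
  assume t: "t \<in> {0..1}"
  show ?thesis
  proof (cases "t < 1")
    case True then show ?thesis using lt1 t by auto
  next
    case False
    hence t1: "t = 1" using t by auto
    have "b \<le> G \<Omega> 1 1" if "0 \<le> b" "b < 1" for b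
      using G_mono_t[of \<Omega> b 1 1] lt1[OF that] that by auto
    hence "1 \<le> G \<Omega> 1 1"
    proof -
      assume h: "\<And>b. 0 \<le> b \<Longrightarrow> b < 1 \<Longrightarrow> b \<le> G \<Omega> 1 1"
      show ?thesis
      proof (rule ccontr)
        assume "\<not> 1 \<le> G \<Omega> 1 1"
        hence "(G \<Omega> 1 1 + 1) / 2 \<le> G \<Omega> 1 1" using G_nonneg[of \<Omega> 1 1] by (intro h) auto
        then show False using \<open>\<not> 1 \<le> G \<Omega> 1 1\<close> by simp
      qed
    qed
    moreover have "G \<Omega> 1 1 \<le> 1" by (simp add: G_def)
    ultimately show ?thesis using t1 by simp
  qed
qed

lemma q0_space: "t \<in> {0..1} \<Longrightarrow> q \<Omega> t 0 = 1 - t"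
proof -
  assume t: "t \<in> {0..1}"
  have "G \<Omega> t 0 = 1" by (simp add: G_def prob_space)
  then show ?thesis using G_split[OF _ t, of \<Omega> 0] G1[OF t] by simp
qed

end


lemma powr_shift: "(a::real) > 0 \<Longrightarrow> a powr (-c) * a = a powr (1 - c)"
proof -
  assume a: "a > 0"
  have "a powr (1 - c) = a powr (1 + - c)" by simp
  also have "\<dots> = a powr 1 * a powr (-c)" by (rule powr_add)
  also have "\<dots> = a * a powr (-c)" using a by simp
  finally show ?thesis by simp
qed

context YS begin

lemma E_psum:
  assumes B: "B \<in> sets M" and t: "t \<in> {0..1}"
  shows "(\<Sum>k<N. \<phi> k * q B t k) = E B (\<lambda>y. if y < N then \<phi> y else 0) t"
proof -
  have "E B (\<lambda>y. if y < N then \<phi> y else 0) t = E B (\<lambda>y. \<Sum>k<N. \<phi> k * of_bool (y = k)) t"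
    by (simp add: sum_delta_nat)
  also have "\<dots> = (\<Sum>k<N. E B (\<lambda>y. \<phi> k * of_bool (y = k)) t)"
    by (rule E_sum, rule E_int_bdd[OF B t, of _ "\<bar>\<phi> _\<bar>"]) (auto simp: abs_mult)
  also have "\<dots> = (\<Sum>k<N. \<phi> k * q B t k)" by (simp add: E_cmult E_q[OF B t])
  finally show ?thesis by simp
qed

lemma E_mono_fun:
  assumes "integrable M (\<lambda>\<omega>. indicator B \<omega> * \<phi> (Y t \<omega>))" "integrable M (\<lambda>\<omega>. indicator B \<omega> * \<psi> (Y t \<omega>))"
    "\<And>y. \<phi> y \<le> \<psi> y"
  shows "E B \<phi> t \<le> E B \<psi> t"
  unfolding E_def by (rule integral_mono[OF assms(1,2)]) (auto simp: indicator_def assms(3))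

lemma E_diff:
  assumes "integrable M (\<lambda>\<omega>. indicator B \<omega> * \<phi> (Y t \<omega>))" "integrable M (\<lambda>\<omega>. indicator B \<omega> * \<psi> (Y t \<omega>))"
  shows "E B (\<lambda>y. \<phi> y - \<psi> y) t = E B \<phi> t - E B \<psi> t"
  unfolding E_def using Bochner_Integration.integral_diff[OF assms] by (simp add: algebra_simps)

lemma int_min: "B \<in> sets M \<Longrightarrow> t \<in> {0..1} \<Longrightarrow> integrable M (\<lambda>\<omega>. indicator B \<omega> * (\<lambda>y. real (min y N)) (Y t \<omega>))"
  by (rule E_int_bdd[of _ _ _ "real N"]) auto

lemma int_min_sq: "B \<in> sets M \<Longrightarrow> t \<in> {0..1} \<Longrightarrow> integrable M (\<lambda>\<omega>. indicator B \<omega> * (\<lambda>y. real (min y N) ^ 2) (Y t \<omega>))"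
  by (rule E_int_bdd[of _ _ _ "real N ^ 2"]) (auto intro: power_mono)

lemma T1_eq: "B \<in> sets M \<Longrightarrow> t \<in> {0..1} \<Longrightarrow> T (\<lambda>_. 1) N B t = E B (\<lambda>y. real (min y N)) t"
  using T_E[of B t "\<lambda>_. 1" N] by (simp add: min_sum)

lemma T2_eq: "B \<in> sets M \<Longrightarrow> t \<in> {0..1} \<Longrightarrow> T (\<lambda>k. 2 * real k + 1) N B t = E B (\<lambda>y. real (min y N) ^ 2) t"
  using T_E[of B t "\<lambda>k. 2 * real k + 1" N] by (simp add: min_sq_sum)

lemma psum1_le_T: "B \<in> sets M \<Longrightarrow> t \<in> {0..1} \<Longrightarrow> (\<Sum>k<N. real k * q B t k) \<le> T (\<lambda>_. 1) N B t"
  unfolding T1_eq E_psum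
  by (rule E_mono_fun) (auto intro!: E_int_bdd[of _ _ _ "real N"] int_min)

lemma psum2_le_T: "B \<in> sets M \<Longrightarrow> t \<in> {0..1} \<Longrightarrow> (\<Sum>k<N. real k ^ 2 * q B t k) \<le> T (\<lambda>k. 2 * real k + 1) N B t"
  unfolding T2_eq E_psum
  by (rule E_mono_fun) (auto intro!: E_int_bdd[of _ _ _ "real N ^ 2"] int_min_sq power_mono)

end


context YS begin

lemma lin_deriv: "((\<lambda>u. K * u) has_real_derivative K) (at t within S)"
  using DERIV_cmult[OF DERIV_ident, of K t S] by simp

lemma a0q0: "0 \<le> t \<Longrightarrow> t < 1 \<Longrightarrow> a 0 t * q \<Omega> t 0 = 1"
  using q0_space[of t] by (simp add: yule_simon_rate_def)

lemma D1_le: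
  assumes t: "0 < t" "t < 1"
  shows "(\<Sum>k<N. 1 * (a k t * q \<Omega> t k)) \<le> 1 + 1 / \<rho> / t * T (\<lambda>_. 1) N \<Omega> t"
proof (cases N)
  case 0 then show ?thesis by (simp add: T_def)
next
  case (Suc N')
  have "(\<Sum>k<N. 1 * (a k t * q \<Omega> t k)) = 1 + 1 / (\<rho> * t) * (\<Sum>k<N. real k * q \<Omega> t k)"
    using rate_sum[OF t(1), where c="\<lambda>_. 1" and N=N' and B=\<Omega>] a0q0[of t] t Suc by simp
  also have "\<dots> \<le> 1 + 1 / (\<rho> * t) * T (\<lambda>_. 1) N \<Omega> t"
    using psum1_le_T[of \<Omega> t N] t rho_pos by (intro add_left_mono mult_left_mono) auto
  finally show ?thesis by simp
qed

lemma upper_i: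
  assumes r: "\<rho> > 1" and b: "0 < b" "b \<le> 1"
  shows "T (\<lambda>_. 1) N \<Omega> b \<le> \<rho> / (\<rho> - 1) * b"
proof -
  define c where "c = 1 / \<rho>"
  define V where "V u = \<rho> / (\<rho> - 1) * u" for u
  define T1 where "T1 u = T (\<lambda>_. 1) N \<Omega> u" for u
  have c: "0 < 1 - c" using r by (simp add: c_def)
  have main: "b powr (-c) * (T1 b - V b) \<le> real N * a' powr (1 - c)" if a': "0 < a'" "a' \<le> b" for a'
  proof -
    have "b powr (-c) * (T1 b - V b) \<le> a' powr (-c) * (T1 a' - V a')"
    proof (rule cmp_upper[where \<alpha>="\<lambda>_. 1" and c=c, OF a'(1) a'(2)])
      show "continuous_on {a'..b} T1" unfolding T1_def
        by (rule continuous_on_subset[OF T_cont]) (use a' b in auto)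
      show "continuous_on {a'..b} V" unfolding V_def by (intro continuous_intros)
    next
      fix t assume t: "t \<in> {a'..<b}"
      hence t1: "0 < t" "t < 1" using a' b by auto
      have eq: "1 + c / t * V t = \<rho> / (\<rho> - 1)" using t1 r by (simp add: c_def V_def field_simps)
      have d: "(V has_real_derivative (\<rho> / (\<rho> - 1))) (at t within {t..})"
        unfolding V_def by (rule lin_deriv)
      show "(V has_real_derivative (1 + c / t * V t)) (at t within {t..})"
        unfolding eq by (rule d)
      have "(T1 has_real_derivative (\<Sum>k<N. 1 * (a k t * q \<Omega> t k))) (at t within {t..})"
        unfolding T1_def by (rule T_deriv[OF _ FAC_space]) (use t1 in auto)
      then show "\<exists>D. (T1 has_real_derivative D) (at t within {t..}) \<and> D \<le> 1 + c / t * T1 t"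
        unfolding c_def T1_def using D1_le[OF t1, of N] by auto
    qed
    also have "\<dots> \<le> a' powr (-c) * T1 a'"
      using a' r by (intro mult_left_mono) (auto simp: V_def)
    also have "\<dots> \<le> a' powr (-c) * (real N * a')"
    proof -
      have "T1 a' \<le> (\<Sum>k<N. 1) * G \<Omega> a' 1" unfolding T1_def by (rule T_le) (use a' b in auto)
      also have "\<dots> = real N * a'" using G1[of a'] a' b by simp
      finally show ?thesis by (intro mult_left_mono) auto
    qed
    also have "\<dots> = real N * a' powr (1 - c)" using powr_shift[OF a'(1), of c] by (simp add: algebra_simps)
    finally show ?thesis .
  qed
  have "b powr (-c) * (T1 b - V b) \<le> 0"
    by (rule limit_le_at_right0[OF tendsto_powr_at_right0[OF c] _ b(1)]) (use main in auto)
  hence "T1 b - V b \<le> 0" using b by (simp add: mult_le_0_iff)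
  then show ?thesis by (simp add: T1_def V_def)
qed

lemma sum_i:
  assumes r: "\<rho> > 1" and b: "0 < b" "b \<le> 1"
  shows "summable (\<lambda>k. real k * q \<Omega> b k)"
    "integrable M (\<lambda>\<omega>. indicator \<Omega> \<omega> * real (Y b \<omega>))"
    "E \<Omega> real b = (\<Sum>k. real k * q \<Omega> b k)"
    "E \<Omega> real b \<le> \<rho> / (\<rho> - 1) * b"
proof -
  have b01: "b \<in> {0..1}" using b by auto
  have ps: "(\<Sum>k<N. real k * q \<Omega> b k) \<le> \<rho> / (\<rho> - 1) * b" for N
    using psum1_le_T[OF _ b01, of \<Omega> N] upper_i[OF r b, of N] by simp
  show sm: "summable (\<lambda>k. real k * q \<Omega> b k)"
    by (rule summableI_nonneg_bounded[OF _ ps]) (simp add: q_nonneg)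
  show "integrable M (\<lambda>\<omega>. indicator \<Omega> \<omega> * real (Y b \<omega>))"
    using E_series(1)[OF _ b01 _ sm] by simp
  show eq: "E \<Omega> real b = (\<Sum>k. real k * q \<Omega> b k)"
    using E_series(2)[OF _ b01 _ sm] by simp
  show "E \<Omega> real b \<le> \<rho> / (\<rho> - 1) * b"
    unfolding eq by (rule suminf_le_const[OF sm ps])
qed

end


context YS begin

lemma F_minus_T_mono:
  assumes B: "B \<in> sets M" and t: "0 \<le> t" "t \<le> t'" "t' \<le> 1" and mono: "mono \<phi>" "mono (\<lambda>y. \<phi> y - \<psi> y)"
    and i: "integrable M (\<lambda>\<omega>. indicator B \<omega> * \<phi> (Y t \<omega>))" "integrable M (\<lambda>\<omega>. indicator B \<omega> * \<phi> (Y t' \<omega>))"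
    "integrable M (\<lambda>\<omega>. indicator B \<omega> * \<psi> (Y t \<omega>))" "integrable M (\<lambda>\<omega>. indicator B \<omega> * \<psi> (Y t' \<omega>))"
  shows "E B \<phi> t' - E B \<phi> t \<ge> E B \<psi> t' - E B \<psi> t"
proof -
  have "E B (\<lambda>y. \<phi> y - \<psi> y) t \<le> E B (\<lambda>y. \<phi> y - \<psi> y) t'"
    by (rule E_mono_t[OF B t mono(2)]) (use i in \<open>auto simp: right_diff_distrib intro!: Bochner_Integration.integrable_diff\<close>)
  then show ?thesis using E_diff[OF i(1,3)] E_diff[OF i(2,4)] by simp
qed

lemma lower_i:
  assumes r: "\<rho> > 1" and b: "0 < b" "b \<le> 1"
  shows "\<rho> / (\<rho> - 1) * b \<le> E \<Omega> real b"
proof -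
  define c where "c = 1 / \<rho>"
  define V where "V u = \<rho> / (\<rho> - 1) * u" for u
  define F where "F u = E \<Omega> real u" for u
  have c: "0 < 1 - c" using r by (simp add: c_def)
  have main: "- (\<rho> / (\<rho> - 1) * a' powr (1 - c)) \<le> b powr (-c) * (F b - V b)" if a': "0 < a'" "a' \<le> b" for a'
  proof -
    have "a' powr (-c) * (F a' - V a') \<le> b powr (-c) * (F b - V b)"
    proof (rule cmp_lower[where \<alpha>="\<lambda>_. 1" and c=c, OF a'(1) a'(2)])
      show "continuous_on {a'..b} V" unfolding V_def by (intro continuous_intros)
    next
      fix t assume t: "t \<in> {a'..<b}"
      hence t1: "0 < t" "t < 1" using a' b by auto
      have eq: "1 + c / t * V t = \<rho> / (\<rho> - 1)" using t1 r by (simp add: c_def V_def field_simps)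
      have d: "(V has_real_derivative (\<rho> / (\<rho> - 1))) (at t within {t..})"
        unfolding V_def by (rule lin_deriv)
      show "(V has_real_derivative (1 + c / t * V t)) (at t within {t..})"
        unfolding eq by (rule d)
    next
      fix s t assume st: "a' \<le> s" "s \<le> t" "t \<le> b"
      show "F s \<le> F t" unfolding F_def
        by (rule E_mono_t) (use st a' b sum_i[OF r] in \<open>auto intro: monoI\<close>)
    next
      fix t assume "t \<in> {a'..b}"
      show "F t \<ge> 0" unfolding F_def E_def by (intro Bochner_Integration.integral_nonneg) (auto simp: indicator_def)
    next
      fix t e :: real assume t: "t \<in> {a'..<b}" and e: "e > 0"
      hence t1: "0 < t" "t < 1" using a' b by auto
      have t01: "t \<in> {0..1}" using t1 by auto
      have lim: "(\<lambda>n. \<Sum>k<n. real k * q \<Omega> t k) \<longlonglongrightarrow> F t"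
        unfolding F_def sum_i(3)[OF r t1(1) less_imp_le[OF t1(2)]] by (rule summable_LIMSEQ[OF sum_i(1)[OF r t1(1) less_imp_le[OF t1(2)]]])
      have "e * \<rho> * t > 0" using e t1 rho_pos by simp
      from LIMSEQ_D[OF lim this] obtain N where N: "\<And>n. n \<ge> N \<Longrightarrow> norm ((\<Sum>k<n. real k * q \<Omega> t k) - F t) < e * \<rho> * t"
        by blast
      define T1 where "T1 u = T (\<lambda>_. 1) (Suc N) \<Omega> u" for u
      define D where "D = (\<Sum>k<Suc N. 1 * (a k t * q \<Omega> t k))"
      have dT: "(T1 has_real_derivative D) (at t within {t..})"
        unfolding T1_def D_def by (rule T_deriv[OF _ FAC_space]) (use t1 in auto)
      have "D = 1 + 1 / (\<rho> * t) * (\<Sum>k<Suc N. real k * q \<Omega> t k)"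
        using rate_sum[OF t1(1), where c="\<lambda>_. 1" and N=N and B=\<Omega>] a0q0[of t] t1 by (simp add: D_def)
      moreover have "(\<Sum>k<Suc N. real k * q \<Omega> t k) \<ge> F t - e * \<rho> * t" using N[of "Suc N"] by auto
      ultimately have "D \<ge> 1 + 1 / (\<rho> * t) * (F t - e * \<rho> * t)"
        using t1 rho_pos by (auto intro!: divide_right_mono)
      also have "1 + 1 / (\<rho> * t) * (F t - e * \<rho> * t) = 1 + c / t * F t - e"
        using t1 rho_pos by (simp add: c_def field_simps)
      finally have Dge: "D \<ge> 1 + c / t * F t - e" .
      have incr: "F (t + h) - F t \<ge> T1 (t + h) - T1 t" if h: "h > 0" "t + h \<le> b" for h
      proof -
        have th: "t + h \<in> {0..1}" "0 < t + h" "t + h \<le> 1" using h t1 b by auto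
        have "E \<Omega> real (t+h) - E \<Omega> real t \<ge> E \<Omega> (\<lambda>y. real (min y (Suc N))) (t+h) - E \<Omega> (\<lambda>y. real (min y (Suc N))) t"
        proof (rule F_minus_T_mono)
          show "mono (\<lambda>y. real y - real (min y (Suc N)))" by (rule monoI) (auto simp: min_def)
        qed (use t1 h th sum_i[OF r] int_min in \<open>auto intro: monoI\<close>)
        then show ?thesis unfolding F_def T1_def using T1_eq[OF _ t01] T1_eq[OF _ th(1)] by simp
      qed
      show "\<exists>T D. (T has_real_derivative D) (at t within {t..}) \<and> D \<ge> 1 + c / t * F t - e \<and>
             (\<forall>h>0. t + h \<le> b \<longrightarrow> F (t+h) - F t \<ge> T (t+h) - T t)"
        using dT Dge incr by blast
    qed
    moreover have "- (\<rho> / (\<rho> - 1) * a' powr (1 - c)) \<le> a' powr (-c) * (F a' - V a')"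
    proof -
      have "F a' \<ge> 0" unfolding F_def E_def by (intro Bochner_Integration.integral_nonneg) (auto simp: indicator_def)
      hence "a' powr (-c) * (F a' - V a') \<ge> a' powr (-c) * (- V a')" by (intro mult_left_mono) auto
      also have "a' powr (-c) * (- V a') = - (\<rho> / (\<rho> - 1) * a' powr (1 - c))"
        using powr_shift[OF a'(1), of c] by (simp add: V_def algebra_simps)
      finally show ?thesis .
    qed
    ultimately show ?thesis by linarith
  qed
  have "- (b powr (-c) * (F b - V b)) \<le> 0"
  proof (rule limit_le_at_right0[OF tendsto_powr_at_right0[OF c, where C="\<rho> / (\<rho> - 1)"] _ b(1)])
    fix a' :: real assume "0 < a'" "a' \<le> b"
    from main[OF this] show "- (b powr (-c) * (F b - V b)) \<le> \<rho> / (\<rho> - 1) * a' powr (1 - c)" by linarith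
  qed
  hence "F b - V b \<ge> 0" using b by (simp add: zero_le_mult_iff)
  then show ?thesis by (simp add: F_def V_def)
qed

lemma mean_i:
  assumes r: "\<rho> > 1" and t: "t \<in> {0..1}"
  shows "(\<integral>\<omega>. real (Y t \<omega>) \<partial>M) = \<rho> / (\<rho> - 1) * t"
proof -
  have eq: "(\<integral>\<omega>. real (Y t \<omega>) \<partial>M) = E \<Omega> real t"
    unfolding E_def by (intro Bochner_Integration.integral_cong) auto
  show ?thesis
  proof (cases "t = 0")
    case True
    have "(\<integral>\<omega>. real (Y t \<omega>) \<partial>M) = (\<integral>\<omega>. 0 \<partial>M)"
      using Y0 True by (intro integral_cong_AE) (auto intro!: E_meas simp: measurable_compose[OF Ymeas])
    then show ?thesis using True by simp
  next
    case False
    hence "0 < t" "t \<le> 1" using t by auto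
    then show ?thesis using eq lower_i[OF r] sum_i(4)[OF r] by (simp add: antisym)
  qed
qed

end


context YS begin

lemma m_val:
  assumes r: "\<rho> > 1" and t: "0 < t" "t \<le> 1"
  shows "(\<Sum>k. real k * q \<Omega> t k) = \<rho> / (\<rho> - 1) * t"
  using sum_i(3)[OF r t] lower_i[OF r t] sum_i(4)[OF r t] by simp

lemma rate_sum2:
  assumes t: "0 < t" "t < 1"
  shows "(\<Sum>k<Suc N. (2 * real k + 1) * (a k t * q \<Omega> t k))
     = 1 + 1 / (\<rho> * t) * (2 * (\<Sum>k<Suc N. real k ^ 2 * q \<Omega> t k) + (\<Sum>k<Suc N. real k * q \<Omega> t k))"
proof -
  have "(\<Sum>k<Suc N. (2 * real k + 1) * real k * q \<Omega> t k) = 2 * (\<Sum>k<Suc N. real k ^ 2 * q \<Omega> t k) + (\<Sum>k<Suc N. real k * q \<Omega> t k)"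
    by (simp add: sum.distrib sum_distrib_left power2_eq_square algebra_simps)
  then show ?thesis
    using rate_sum[OF t(1), where c="\<lambda>k. 2 * real k + 1" and N=N and B=\<Omega>] a0q0[of t] t by simp
qed

lemma D2_le:
  assumes r: "\<rho> > 1" and t: "0 < t" "t < 1"
  shows "(\<Sum>k<N. (2 * real k + 1) * (a k t * q \<Omega> t k)) \<le> \<rho> / (\<rho> - 1) + 2 / \<rho> / t * T (\<lambda>k. 2 * real k + 1) N \<Omega> t"
proof (cases N)
  case 0 then show ?thesis using r by (simp add: T_def)
next
  case (Suc N')
  have t01: "t \<in> {0..1}" using t by auto
  have m: "(\<Sum>k<N. real k * q \<Omega> t k) \<le> \<rho> / (\<rho> - 1) * t"
    using sum_le_suminf[OF sum_i(1)[OF r t(1) less_imp_le[OF t(2)]], of "{..<N}"] m_val[OF r t(1) less_imp_le[OF t(2)]]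
    by (simp add: q_nonneg)
  have "(\<Sum>k<N. (2 * real k + 1) * (a k t * q \<Omega> t k))
     = 1 + 1 / (\<rho> * t) * (2 * (\<Sum>k<N. real k ^ 2 * q \<Omega> t k) + (\<Sum>k<N. real k * q \<Omega> t k))"
    using rate_sum2[OF t, of N'] Suc by simp
  also have "\<dots> \<le> 1 + 1 / (\<rho> * t) * (2 * T (\<lambda>k. 2 * real k + 1) N \<Omega> t + \<rho> / (\<rho> - 1) * t)"
    using psum2_le_T[OF _ t01, of \<Omega> N] m t rho_pos by (intro add_left_mono mult_left_mono add_mono) auto
  also have "\<dots> = \<rho> / (\<rho> - 1) + 2 / \<rho> / t * T (\<lambda>k. 2 * real k + 1) N \<Omega> t"
    using t r by (simp add: field_simps)
  finally show ?thesis .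
qed

definition A2 where "A2 = \<rho>\<^sup>2 / ((\<rho> - 1) * (\<rho> - 2))"

lemma A2_eq:
  assumes "\<rho> > 2" "t > 0" shows "\<rho> / (\<rho> - 1) + 2 / \<rho> / t * (A2 * t) = A2"
proof -
  have n: "\<rho> - 1 \<noteq> 0" "\<rho> - 2 \<noteq> 0" "\<rho> \<noteq> 0" "t \<noteq> 0" using assms by auto
  have n2: "\<rho> * \<rho> + 2 - \<rho> * 3 \<noteq> 0"
  proof -
    have "\<rho> * \<rho> + 2 - \<rho> * 3 = (\<rho> - 1) * (\<rho> - 2)" by (simp add: algebra_simps)
    thus ?thesis using n by simp
  qed
  have "\<rho> / (\<rho> - 1) + 2 / \<rho> / t * (A2 * t) = \<rho> / (\<rho> - 1) + 2 * \<rho> / ((\<rho> - 1) * (\<rho> - 2))"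
    using n by (simp add: A2_def power2_eq_square)
  also have "\<dots> = (\<rho> * (\<rho> - 2) + 2 * \<rho>) / ((\<rho> - 1) * (\<rho> - 2))"
  proof -
    have e1: "\<rho> / (\<rho> - 1) = \<rho> * (\<rho> - 2) / ((\<rho> - 1) * (\<rho> - 2))" using n by simp
    show ?thesis unfolding e1 by (rule add_divide_distrib[symmetric])
  qed
  also have "\<dots> = A2"
  proof -
    have "\<rho> * (\<rho> - 2) + 2 * \<rho> = \<rho>\<^sup>2" by (simp add: algebra_simps power2_eq_square)
    then show ?thesis by (simp add: A2_def)
  qed
  finally show ?thesis .
qed

lemma upper_ii:
  assumes r: "\<rho> > 2" and b: "0 < b" "b \<le> 1"
  shows "T (\<lambda>k. 2 * real k + 1) N \<Omega> b \<le> A2 * b"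
proof -
  have r1: "\<rho> > 1" using r by simp
  define c where "c = 2 / \<rho>"
  define V where "V u = A2 * u" for u
  define T2 where "T2 u = T (\<lambda>k. 2 * real k + 1) N \<Omega> u" for u
  have c: "0 < 1 - c" using r by (simp add: c_def)
  have main: "b powr (-c) * (T2 b - V b) \<le> real N ^ 2 * a' powr (1 - c)" if a': "0 < a'" "a' \<le> b" for a'
  proof -
    have "b powr (-c) * (T2 b - V b) \<le> a' powr (-c) * (T2 a' - V a')"
    proof (rule cmp_upper[where \<alpha>="\<lambda>_. \<rho> / (\<rho> - 1)" and c=c, OF a'(1) a'(2)])
      show "continuous_on {a'..b} T2" unfolding T2_def
        by (rule continuous_on_subset[OF T_cont]) (use a' b in auto)
      show "continuous_on {a'..b} V" unfolding V_def by (intro continuous_intros)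
    next
      fix t assume t: "t \<in> {a'..<b}"
      hence t1: "0 < t" "t < 1" using a' b by auto
      have eq: "\<rho> / (\<rho> - 1) + c / t * V t = A2" using A2_eq[OF r t1(1)] by (simp add: c_def V_def)
      have d: "(V has_real_derivative A2) (at t within {t..})" unfolding V_def by (rule lin_deriv)
      show "(V has_real_derivative (\<rho> / (\<rho> - 1) + c / t * V t)) (at t within {t..})"
        unfolding eq by (rule d)
      have "(T2 has_real_derivative (\<Sum>k<N. (2 * real k + 1) * (a k t * q \<Omega> t k))) (at t within {t..})"
        unfolding T2_def by (rule T_deriv[OF _ FAC_space]) (use t1 in auto)
      then show "\<exists>D. (T2 has_real_derivative D) (at t within {t..}) \<and> D \<le> \<rho> / (\<rho> - 1) + c / t * T2 t"
        unfolding c_def T2_def using D2_le[OF r1 t1, of N] by auto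
    qed
    also have "\<dots> \<le> a' powr (-c) * T2 a'"
      using a' r by (intro mult_left_mono) (auto simp: V_def A2_def)
    also have "\<dots> \<le> a' powr (-c) * (real N ^ 2 * a')"
    proof -
      have "T2 a' \<le> (\<Sum>k<N. 2 * real k + 1) * G \<Omega> a' 1" unfolding T2_def by (rule T_le) (use a' b in auto)
      also have "(\<Sum>k<N. 2 * real k + 1) = real N ^ 2" by (induction N) (auto simp: power2_eq_square algebra_simps)
      also have "G \<Omega> a' 1 = a'" using G1[of a'] a' b by simp
      finally show ?thesis by (intro mult_left_mono) auto
    qed
    also have "\<dots> = real N ^ 2 * a' powr (1 - c)" using powr_shift[OF a'(1), of c] by (simp add: algebra_simps)
    finally show ?thesis .
  qed
  have "b powr (-c) * (T2 b - V b) \<le> 0"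
    by (rule limit_le_at_right0[OF tendsto_powr_at_right0[OF c] _ b(1)]) (use main in auto)
  hence "T2 b - V b \<le> 0" using b by (simp add: mult_le_0_iff)
  then show ?thesis by (simp add: T2_def V_def)
qed

lemma sum_ii:
  assumes r: "\<rho> > 2" and b: "0 < b" "b \<le> 1"
  shows "summable (\<lambda>k. real k ^ 2 * q \<Omega> b k)"
    "integrable M (\<lambda>\<omega>. indicator \<Omega> \<omega> * real (Y b \<omega>) ^ 2)"
    "E \<Omega> (\<lambda>y. real y ^ 2) b = (\<Sum>k. real k ^ 2 * q \<Omega> b k)"
    "E \<Omega> (\<lambda>y. real y ^ 2) b \<le> A2 * b"
proof -
  have b01: "b \<in> {0..1}" using b by auto
  have ps: "(\<Sum>k<N. real k ^ 2 * q \<Omega> b k) \<le> A2 * b" for N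
    using psum2_le_T[OF _ b01, of \<Omega> N] upper_ii[OF r b, of N] by simp
  show sm: "summable (\<lambda>k. real k ^ 2 * q \<Omega> b k)"
    by (rule summableI_nonneg_bounded[OF _ ps]) (simp add: q_nonneg)
  show "integrable M (\<lambda>\<omega>. indicator \<Omega> \<omega> * real (Y b \<omega>) ^ 2)"
    using E_series(1)[OF _ b01 _ sm] by simp
  show eq: "E \<Omega> (\<lambda>y. real y ^ 2) b = (\<Sum>k. real k ^ 2 * q \<Omega> b k)"
    using E_series(2)[OF _ b01 _ sm] by simp
  show "E \<Omega> (\<lambda>y. real y ^ 2) b \<le> A2 * b"
    unfolding eq by (rule suminf_le_const[OF sm ps])
qed

end


context YS begin

lemma lower_ii:
  assumes r: "\<rho> > 2" and b: "0 < b" "b \<le> 1"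
  shows "A2 * b \<le> E \<Omega> (\<lambda>y. real y ^ 2) b"
proof -
  have r1: "\<rho> > 1" using r by simp
  define c where "c = 2 / \<rho>"
  define V where "V u = A2 * u" for u
  define F where "F u = E \<Omega> (\<lambda>y. real y ^ 2) u" for u
  have c: "0 < 1 - c" using r by (simp add: c_def)
  have A2pos: "A2 > 0" using r by (simp add: A2_def)
  have main: "- (A2 * a' powr (1 - c)) \<le> b powr (-c) * (F b - V b)" if a': "0 < a'" "a' \<le> b" for a'
  proof -
    have "a' powr (-c) * (F a' - V a') \<le> b powr (-c) * (F b - V b)"
    proof (rule cmp_lower[where \<alpha>="\<lambda>_. \<rho> / (\<rho> - 1)" and c=c, OF a'(1) a'(2)])
      show "continuous_on {a'..b} V" unfolding V_def by (intro continuous_intros)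
    next
      fix t assume t: "t \<in> {a'..<b}"
      hence t1: "0 < t" "t < 1" using a' b by auto
      have eq: "\<rho> / (\<rho> - 1) + c / t * V t = A2" using A2_eq[OF r t1(1)] by (simp add: c_def V_def)
      have d: "(V has_real_derivative A2) (at t within {t..})" unfolding V_def by (rule lin_deriv)
      show "(V has_real_derivative (\<rho> / (\<rho> - 1) + c / t * V t)) (at t within {t..})"
        unfolding eq by (rule d)
    next
      fix s t assume st: "a' \<le> s" "s \<le> t" "t \<le> b"
      show "F s \<le> F t" unfolding F_def
        by (rule E_mono_t) (use st a' b sum_ii[OF r] in \<open>auto intro: monoI\<close>)
    next
      fix t assume "t \<in> {a'..b}"
      show "F t \<ge> 0" unfolding F_def E_def by (intro Bochner_Integration.integral_nonneg) (auto simp: indicator_def)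
    next
      fix t e :: real assume t: "t \<in> {a'..<b}" and e: "e > 0"
      hence t1: "0 < t" "t < 1" using a' b by auto
      have t01: "t \<in> {0..1}" "t \<le> 1" using t1 by auto
      have lim1: "(\<lambda>n. \<Sum>k<n. real k * q \<Omega> t k) \<longlonglongrightarrow> \<rho> / (\<rho> - 1) * t"
        using summable_LIMSEQ[OF sum_i(1)[OF r1 t1(1) t01(2)]] m_val[OF r1 t1(1) t01(2)] by simp
      have lim2: "(\<lambda>n. \<Sum>k<n. real k ^ 2 * q \<Omega> t k) \<longlonglongrightarrow> F t"
        unfolding F_def sum_ii(3)[OF r t1(1) t01(2)] by (rule summable_LIMSEQ[OF sum_ii(1)[OF r t1(1) t01(2)]])
      have lim: "(\<lambda>n. 2 * (\<Sum>k<n. real k ^ 2 * q \<Omega> t k) + (\<Sum>k<n. real k * q \<Omega> t k)) \<longlonglongrightarrow> 2 * F t + \<rho> / (\<rho> - 1) * t"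
        by (intro tendsto_intros lim1 lim2)
      have "e * \<rho> * t > 0" using e t1 rho_pos by simp
      from LIMSEQ_D[OF lim this] obtain N where
        N: "\<And>n. n \<ge> N \<Longrightarrow> norm (2 * (\<Sum>k<n. real k ^ 2 * q \<Omega> t k) + (\<Sum>k<n. real k * q \<Omega> t k) - (2 * F t + \<rho> / (\<rho> - 1) * t)) < e * \<rho> * t"
        by blast
      define T2 where "T2 u = T (\<lambda>k. 2 * real k + 1) (Suc N) \<Omega> u" for u
      define D where "D = (\<Sum>k<Suc N. (2 * real k + 1) * (a k t * q \<Omega> t k))"
      have dT: "(T2 has_real_derivative D) (at t within {t..})"
        unfolding T2_def D_def by (rule T_deriv[OF _ FAC_space]) (use t1 in auto)
      have "D = 1 + 1 / (\<rho> * t) * (2 * (\<Sum>k<Suc N. real k ^ 2 * q \<Omega> t k) + (\<Sum>k<Suc N. real k * q \<Omega> t k))"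
        unfolding D_def by (rule rate_sum2[OF t1])
      moreover have "2 * (\<Sum>k<Suc N. real k ^ 2 * q \<Omega> t k) + (\<Sum>k<Suc N. real k * q \<Omega> t k) \<ge> 2 * F t + \<rho> / (\<rho> - 1) * t - e * \<rho> * t"
        using N[of "Suc N"] by auto
      ultimately have "D \<ge> 1 + 1 / (\<rho> * t) * (2 * F t + \<rho> / (\<rho> - 1) * t - e * \<rho> * t)"
        using t1 rho_pos by (auto intro!: divide_right_mono)
      also have "1 + 1 / (\<rho> * t) * (2 * F t + \<rho> / (\<rho> - 1) * t - e * \<rho> * t) = \<rho> / (\<rho> - 1) + c / t * F t - e"
      proof -
        have n: "\<rho> - 1 \<noteq> 0" "\<rho> \<noteq> 0" "t \<noteq> 0" using r1 t1 by auto
        have "1 + 1 / (\<rho> * t) * (2 * F t + \<rho> / (\<rho> - 1) * t - e * \<rho> * t) = 1 + 1 / (\<rho> - 1) + c / t * F t - e"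
          using n by (simp add: c_def field_simps)
        also have "1 + 1 / (\<rho> - 1) = \<rho> / (\<rho> - 1)" using n by (simp add: field_simps)
        finally show ?thesis .
      qed
      finally have Dge: "D \<ge> \<rho> / (\<rho> - 1) + c / t * F t - e" .
      have incr: "F (t + h) - F t \<ge> T2 (t + h) - T2 t" if h: "h > 0" "t + h \<le> b" for h
      proof -
        have th: "t + h \<in> {0..1}" "0 < t + h" "t + h \<le> 1" using h t1 b by auto
        have "E \<Omega> (\<lambda>y. real y ^ 2) (t+h) - E \<Omega> (\<lambda>y. real y ^ 2) t \<ge> E \<Omega> (\<lambda>y. real (min y (Suc N)) ^ 2) (t+h) - E \<Omega> (\<lambda>y. real (min y (Suc N)) ^ 2) t"
        proof (rule F_minus_T_mono)
          show "mono (\<lambda>y. real y ^ 2 - real (min y (Suc N)) ^ 2)"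
          proof (rule monoI)
            fix x y :: nat assume "x \<le> y"
            then show "real x ^ 2 - real (min x (Suc N)) ^ 2 \<le> real y ^ 2 - real (min y (Suc N)) ^ 2"
              by (cases "x \<le> Suc N"; cases "y \<le> Suc N") (auto simp: min_def power_mono)
          qed
          show "mono (\<lambda>y. real y ^ 2)" by (rule monoI) (auto simp: power_mono)
        qed (use t1 h th sum_ii[OF r] int_min_sq in auto)
        then show ?thesis unfolding F_def T2_def using T2_eq[OF _ t01(1)] T2_eq[OF _ th(1)] by simp
      qed
      show "\<exists>T D. (T has_real_derivative D) (at t within {t..}) \<and> D \<ge> \<rho> / (\<rho> - 1) + c / t * F t - e \<and>
             (\<forall>h>0. t + h \<le> b \<longrightarrow> F (t+h) - F t \<ge> T (t+h) - T t)"
        using dT Dge incr by blast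
    qed
    moreover have "- (A2 * a' powr (1 - c)) \<le> a' powr (-c) * (F a' - V a')"
    proof -
      have "F a' \<ge> 0" unfolding F_def E_def by (intro Bochner_Integration.integral_nonneg) (auto simp: indicator_def)
      hence "a' powr (-c) * (F a' - V a') \<ge> a' powr (-c) * (- V a')" by (intro mult_left_mono) auto
      also have "a' powr (-c) * (- V a') = - (A2 * a' powr (1 - c))"
        using powr_shift[OF a'(1), of c] by (simp add: V_def algebra_simps)
      finally show ?thesis .
    qed
    ultimately show ?thesis by linarith
  qed
  have "- (b powr (-c) * (F b - V b)) \<le> 0"
  proof (rule limit_le_at_right0[OF tendsto_powr_at_right0[OF c, where C="A2"] _ b(1)])
    fix a' :: real assume "0 < a'" "a' \<le> b"
    from main[OF this] show "- (b powr (-c) * (F b - V b)) \<le> A2 * a' powr (1 - c)" by linarith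
  qed
  hence "F b - V b \<ge> 0" using b by (simp add: zero_le_mult_iff)
  then show ?thesis by (simp add: F_def V_def)
qed

lemma second_moment:
  assumes r: "\<rho> > 2" and b: "0 < b" "b \<le> 1"
  shows "E \<Omega> (\<lambda>y. real y ^ 2) b = A2 * b" "(\<Sum>k. real k ^ 2 * q \<Omega> b k) = A2 * b"
  using lower_ii[OF r b] sum_ii[OF r b] by simp_all

end


context YS begin

definition Bs :: "real \<Rightarrow> nat \<Rightarrow> 'a set" where "Bs s j0 = {\<omega>\<in>space M. Y s \<omega> = j0}"
definition Vc :: "real \<Rightarrow> nat \<Rightarrow> real \<Rightarrow> real" where
  "Vc s j0 t = real j0 * q \<Omega> s j0 * s powr (- (1/\<rho>)) * t powr (1/\<rho>)"

lemma Bs_sets: "s \<in> {0..1} \<Longrightarrow> Bs s j0 \<in> sets M"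
  unfolding Bs_def by (rule sets_Y)

lemma PBs: "measure M (Bs s j0) = q \<Omega> s j0"
  by (simp add: Bs_def q_def)

lemma Vc_s: "s > 0 \<Longrightarrow> Vc s j0 s = real j0 * q \<Omega> s j0"
  by (simp add: Vc_def powr_minus field_simps)

lemma Vc_deriv:
  assumes "t > 0"
  shows "(Vc s j0 has_real_derivative (0 + (1/\<rho>) / t * Vc s j0 t)) (at t within S)"
proof -
  have "((\<lambda>u. u powr (1/\<rho>)) has_real_derivative (1/\<rho>) * t powr (1/\<rho> - 1)) (at t)"
    by (rule has_real_derivative_powr[OF assms])
  hence "((\<lambda>u. u powr (1/\<rho>)) has_real_derivative (1/\<rho>) * t powr (1/\<rho>) / t) (at t within S)"
    using assms by (auto simp: powr_diff intro: has_field_derivative_at_within)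
  from DERIV_cmult[OF this, of "real j0 * q \<Omega> s j0 * s powr (- (1/\<rho>))"]
  show ?thesis unfolding Vc_def by (simp add: algebra_simps)
qed

lemma Vc_cont: "0 < u \<Longrightarrow> continuous_on {u..v} (Vc s j0)"
  unfolding Vc_def by (intro continuous_intros) (use rho_pos in auto)

lemma Vc_nonneg: "Vc s j0 t \<ge> 0"
  unfolding Vc_def by (intro mult_nonneg_nonneg) (auto simp: q_nonneg)

lemma qB0:
  assumes s: "0 \<le> s" "s \<le> t" "t \<le> 1" and j0: "j0 \<ge> 1"
  shows "q (Bs s j0) t 0 = 0"
proof -
  have "q (Bs s j0) t 0 = measure M {}" unfolding q_def
  proof (rule measure_eq_AE)
    show "AE \<omega> in M. (\<omega> \<in> {\<omega> \<in> space M. \<omega> \<in> Bs s j0 \<and> Y t \<omega> = 0}) = (\<omega> \<in> {})"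
      using Ymono[OF s] by eventually_elim (use j0 in \<open>auto simp: Bs_def\<close>)
  qed (use s Bs_sets in \<open>auto intro!: sets_BY\<close>)
  then show ?thesis by simp
qed

lemma E_at_s:
  assumes s: "s \<in> {0..1}"
  shows "E (Bs s j0) \<phi> s = \<phi> j0 * q \<Omega> s j0"
proof -
  have "E (Bs s j0) \<phi> s = E (Bs s j0) (\<lambda>y. \<phi> j0 * of_bool (y = j0)) s"
    unfolding E_def by (intro Bochner_Integration.integral_cong) (auto simp: Bs_def indicator_def)
  also have "\<dots> = \<phi> j0 * q (Bs s j0) s j0" by (simp add: E_cmult E_q[OF Bs_sets[OF s] s])
  also have "q (Bs s j0) s j0 = q \<Omega> s j0" unfolding q_def by (intro arg_cong[where f="measure M"]) (auto simp: Bs_def)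
  finally show ?thesis .
qed

lemma Dc_eq:
  assumes s: "0 < s" "s \<le> t" "t < 1" and j0: "j0 \<ge> 1"
  shows "(\<Sum>k<Suc N. 1 * (a k t * q (Bs s j0) t k)) = 1 / (\<rho> * t) * (\<Sum>k<Suc N. real k * q (Bs s j0) t k)"
  using rate_sum[where c="\<lambda>_. 1" and N=N and B="Bs s j0", of t] qB0[of s t j0] s j0 by simp

lemma cond_upper:
  assumes s: "0 < s" "s \<le> b" "b \<le> 1" and j0: "j0 \<ge> 1"
  shows "T (\<lambda>_. 1) N (Bs s j0) b \<le> Vc s j0 b"
proof (cases "s = b")
  case True
  have "T (\<lambda>_. 1) N (Bs s j0) s = real (min j0 N) * q \<Omega> s j0"
    using T1_eq[OF Bs_sets, of s s N j0] E_at_s[of s j0 "\<lambda>y. real (min y N)"] s by simp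
  also have "\<dots> \<le> Vc s j0 s" using Vc_s[OF s(1)] by (auto intro: mult_right_mono simp: q_nonneg)
  finally show ?thesis using True by simp
next
  case False
  hence sb: "s < b" using s by simp
  define c where "c = 1 / \<rho>"
  define T1 where "T1 u = T (\<lambda>_. 1) N (Bs s j0) u" for u
  have s01: "s \<in> {0..1}" using s by auto
  have "b powr (-c) * (T1 b - Vc s j0 b) \<le> s powr (-c) * (T1 s - Vc s j0 s)"
  proof (rule cmp_upper[where \<alpha>="\<lambda>_. 0" and c=c, OF s(1) s(2)])
    show "continuous_on {s..b} T1" unfolding T1_def
      by (rule continuous_on_subset[OF T_cont[OF Bs_sets[OF s01]]]) (use s in auto)
    show "continuous_on {s..b} (Vc s j0)" by (rule Vc_cont[OF s(1)])
  next
    fix t assume t: "t \<in> {s..<b}"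
    hence t1: "0 < t" "t < 1" "s \<le> t" using s by auto
    show "(Vc s j0 has_real_derivative (0 + c / t * Vc s j0 t)) (at t within {t..})"
      unfolding c_def by (rule Vc_deriv[OF t1(1)])
    have "(T1 has_real_derivative (\<Sum>k<N. 1 * (a k t * q (Bs s j0) t k))) (at t within {t..})"
      unfolding T1_def by (rule T_deriv[OF Bs_sets[OF s01] FAC_ev[unfolded Bs_def[symmetric]]]) (use s t1 in auto)
    moreover have "(\<Sum>k<N. 1 * (a k t * q (Bs s j0) t k)) \<le> 0 + c / t * T1 t"
    proof (cases N)
      case 0 then show ?thesis by (simp add: T1_def T_def)
    next
      case (Suc N')
      have "(\<Sum>k<N. 1 * (a k t * q (Bs s j0) t k)) = 1 / (\<rho> * t) * (\<Sum>k<N. real k * q (Bs s j0) t k)"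
        using Dc_eq[of s t j0 N'] s t1 j0 Suc by simp
      also have "\<dots> \<le> 1 / (\<rho> * t) * T1 t"
        unfolding T1_def using psum1_le_T[OF Bs_sets[OF s01, of j0], of t, where N=N] t1 rho_pos by (intro mult_left_mono) auto
      finally show ?thesis by (simp add: c_def)
    qed
    ultimately show "\<exists>D. (T1 has_real_derivative D) (at t within {t..}) \<and> D \<le> 0 + c / t * T1 t" by blast
  qed
  also have "\<dots> \<le> 0"
  proof -
    have "T1 s \<le> Vc s j0 s"
      using T1_eq[OF Bs_sets, of s s N j0] E_at_s[of s j0 "\<lambda>y. real (min y N)"] s Vc_s[OF s(1)]
      by (auto simp: T1_def intro: mult_right_mono q_nonneg)
    then show ?thesis by (simp add: mult_le_0_iff)
  qed
  finally have "T1 b - Vc s j0 b \<le> 0" using s by (simp add: mult_le_0_iff)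
  then show ?thesis by (simp add: T1_def)
qed

lemma cond_sum:
  assumes s: "0 < s" "s \<le> b" "b \<le> 1" and j0: "j0 \<ge> 1"
  shows "summable (\<lambda>k. real k * q (Bs s j0) b k)"
    "integrable M (\<lambda>\<omega>. indicator (Bs s j0) \<omega> * real (Y b \<omega>))"
    "E (Bs s j0) real b = (\<Sum>k. real k * q (Bs s j0) b k)"
    "E (Bs s j0) real b \<le> Vc s j0 b"
proof -
  have b01: "b \<in> {0..1}" "s \<in> {0..1}" using s by auto
  have ps: "(\<Sum>k<N. real k * q (Bs s j0) b k) \<le> Vc s j0 b" for N
    using psum1_le_T[OF Bs_sets[OF b01(2), of j0] b01(1), where N=N] cond_upper[OF s j0, of N] by simp
  show sm: "summable (\<lambda>k. real k * q (Bs s j0) b k)"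
    by (rule summableI_nonneg_bounded[OF _ ps]) (simp add: q_nonneg)
  show "integrable M (\<lambda>\<omega>. indicator (Bs s j0) \<omega> * real (Y b \<omega>))"
    using E_series(1)[OF Bs_sets[OF b01(2)] b01(1) _ sm] by simp
  show eq: "E (Bs s j0) real b = (\<Sum>k. real k * q (Bs s j0) b k)"
    using E_series(2)[OF Bs_sets[OF b01(2)] b01(1) _ sm] by simp
  show "E (Bs s j0) real b \<le> Vc s j0 b"
    unfolding eq by (rule suminf_le_const[OF sm ps])
qed

end


context YS begin

lemma cond_lower:
  assumes s: "0 < s" "s \<le> b" "b \<le> 1" and j0: "j0 \<ge> 1"
  shows "Vc s j0 b \<le> E (Bs s j0) real b"
proof (cases "s = b")
  case True
  then show ?thesis using E_at_s[of s j0 real] Vc_s[OF s(1)] s by simp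
next
  case False
  hence sb: "s < b" using s by simp
  define c where "c = 1 / \<rho>"
  define F where "F u = E (Bs s j0) real u" for u
  have s01: "s \<in> {0..1}" using s by auto
  have BS: "Bs s j0 \<in> sets M" by (rule Bs_sets[OF s01])
  have "s powr (-c) * (F s - Vc s j0 s) \<le> b powr (-c) * (F b - Vc s j0 b)"
  proof (rule cmp_lower[where \<alpha>="\<lambda>_. 0" and c=c, OF s(1) s(2)])
    show "continuous_on {s..b} (Vc s j0)" by (rule Vc_cont[OF s(1)])
  next
    fix t assume t: "t \<in> {s..<b}"
    hence t1: "0 < t" "t < 1" "s \<le> t" using s by auto
    show "(Vc s j0 has_real_derivative (0 + c / t * Vc s j0 t)) (at t within {t..})"
      unfolding c_def by (rule Vc_deriv[OF t1(1)])
  next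
    fix u t assume st: "s \<le> u" "u \<le> t" "t \<le> b"
    show "F u \<le> F t" unfolding F_def
      by (rule E_mono_t[OF BS]) (use st s cond_sum[OF _ _ _ j0] in \<open>auto intro: monoI\<close>)
  next
    fix t assume "t \<in> {s..b}"
    show "F t \<ge> 0" unfolding F_def E_def by (intro Bochner_Integration.integral_nonneg) (auto simp: indicator_def)
  next
    fix t e :: real assume t: "t \<in> {s..<b}" and e: "e > 0"
    hence t1: "0 < t" "t < 1" "s \<le> t" using s by auto
    have t01: "t \<in> {0..1}" "t \<le> 1" using t1 by auto
    have lim: "(\<lambda>n. \<Sum>k<n. real k * q (Bs s j0) t k) \<longlonglongrightarrow> F t"
      unfolding F_def cond_sum(3)[OF s(1) t1(3) t01(2) j0]
      by (rule summable_LIMSEQ[OF cond_sum(1)[OF s(1) t1(3) t01(2) j0]])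
    have "e * \<rho> * t > 0" using e t1 rho_pos by simp
    from LIMSEQ_D[OF lim this] obtain N where N: "\<And>n. n \<ge> N \<Longrightarrow> norm ((\<Sum>k<n. real k * q (Bs s j0) t k) - F t) < e * \<rho> * t"
      by blast
    define T1 where "T1 u = T (\<lambda>_. 1) (Suc N) (Bs s j0) u" for u
    define D where "D = (\<Sum>k<Suc N. 1 * (a k t * q (Bs s j0) t k))"
    have dT: "(T1 has_real_derivative D) (at t within {t..})"
      unfolding T1_def D_def by (rule T_deriv[OF BS FAC_ev[unfolded Bs_def[symmetric]]]) (use s t1 in auto)
    have "D = 1 / (\<rho> * t) * (\<Sum>k<Suc N. real k * q (Bs s j0) t k)"
      unfolding D_def by (rule Dc_eq) (use s t1 j0 in auto)
    moreover have "(\<Sum>k<Suc N. real k * q (Bs s j0) t k) \<ge> F t - e * \<rho> * t" using N[of "Suc N"] by auto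
    ultimately have "D \<ge> 1 / (\<rho> * t) * (F t - e * \<rho> * t)"
      using t1 rho_pos by (auto intro!: divide_right_mono)
    also have "1 / (\<rho> * t) * (F t - e * \<rho> * t) = 0 + c / t * F t - e"
      using t1 rho_pos by (simp add: c_def field_simps)
    finally have Dge: "D \<ge> 0 + c / t * F t - e" .
    have incr: "F (t + h) - F t \<ge> T1 (t + h) - T1 t" if h: "h > 0" "t + h \<le> b" for h
    proof -
      have th: "t + h \<in> {0..1}" "s \<le> t + h" "t + h \<le> 1" using h t1 s by auto
      have "E (Bs s j0) real (t+h) - E (Bs s j0) real t \<ge> E (Bs s j0) (\<lambda>y. real (min y (Suc N))) (t+h) - E (Bs s j0) (\<lambda>y. real (min y (Suc N))) t"
      proof (rule F_minus_T_mono[OF BS])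
        show "mono (\<lambda>y. real y - real (min y (Suc N)))" by (rule monoI) (auto simp: min_def)
      qed (use t1 h th s cond_sum(2)[OF _ _ _ j0] int_min[OF BS] in \<open>auto intro: monoI\<close>)
      then show ?thesis unfolding F_def T1_def using T1_eq[OF BS t01(1)] T1_eq[OF BS th(1)] by simp
    qed
    show "\<exists>T D. (T has_real_derivative D) (at t within {t..}) \<and> D \<ge> 0 + c / t * F t - e \<and>
           (\<forall>h>0. t + h \<le> b \<longrightarrow> F (t+h) - F t \<ge> T (t+h) - T t)"
      using dT Dge incr by blast
  qed
  moreover have "F s = Vc s j0 s" using E_at_s[of s j0 real] Vc_s[OF s(1)] s by (simp add: F_def)
  ultimately have "0 \<le> b powr (-c) * (F b - Vc s j0 b)" by simp
  hence "F b - Vc s j0 b \<ge> 0" using s by (simp add: zero_le_mult_iff)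
  then show ?thesis by (simp add: F_def)
qed

lemma cond_mean:
  assumes s: "0 < s" "s \<le> t" "t \<le> 1" and j0: "j0 \<ge> 1"
  shows "E (Bs s j0) real t = Vc s j0 t"
  using cond_lower[OF s j0] cond_sum(4)[OF s j0] by simp

end


context YS begin

lemma cross_moment:
  assumes r: "\<rho> > 2" and s: "0 < s" "s \<le> t" "t \<le> 1"
  shows "(\<integral>\<omega>. real (Y t \<omega>) * real (Y s \<omega>) \<partial>M) = \<rho>\<^sup>2 / ((\<rho> - 1) * (\<rho> - 2)) * s * (t / s) powr (1 / \<rho>)"
proof -
  have s01: "s \<in> {0..1}" "t \<in> {0..1}" "s \<le> 1" using s by auto
  define K where "K = s powr (- (1/\<rho>)) * t powr (1/\<rho>)"
  define f where "f n \<omega> = (\<Sum>j<n. real j * (indicator (Bs s j) \<omega> * real (Y t \<omega>)))" for n \<omega>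
  have fpt: "f n \<omega> = (if Y s \<omega> < n then real (Y s \<omega>) * real (Y t \<omega>) else 0)" if "\<omega> \<in> space M" for n \<omega>
  proof -
    have "f n \<omega> = (\<Sum>j<n. (real j * real (Y t \<omega>)) * of_bool (Y s \<omega> = j))"
      unfolding f_def using that by (intro sum.cong) (auto simp: indicator_def Bs_def)
    also have "\<dots> = (if Y s \<omega> < n then real (Y s \<omega>) * real (Y t \<omega>) else 0)"
      by (rule sum_delta_nat)
    finally show ?thesis .
  qed
  have int_j: "integrable M (\<lambda>\<omega>. real j * (indicator (Bs s j) \<omega> * real (Y t \<omega>)))" for j
  proof (cases "j = 0")
    case True then show ?thesis by simp
  next
    case False
    then show ?thesis using cond_sum(2)[OF s, of j] by (intro integrable_mult_right) auto
  qed
  have fi: "integrable M (f n)" for n unfolding f_def by (intro Bochner_Integration.integrable_sum int_j)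
  have fint: "integral\<^sup>L M (f n) = (\<Sum>j<n. real j ^ 2 * q \<Omega> s j) * K" for n
  proof -
    have "integral\<^sup>L M (f n) = (\<Sum>j<n. real j * E (Bs s j) real t)"
      unfolding f_def E_def by (subst Bochner_Integration.integral_sum[OF int_j]) simp
    also have "\<dots> = (\<Sum>j<n. real j ^ 2 * q \<Omega> s j * K)"
    proof (intro sum.cong refl)
      fix j assume "j \<in> {..<n}"
      show "real j * E (Bs s j) real t = real j ^ 2 * q \<Omega> s j * K"
      proof (cases "j = 0")
        case False
        then show ?thesis using cond_mean[OF s, of j] by (simp add: Vc_def K_def power2_eq_square)
      qed simp
    qed
    finally show ?thesis by (simp add: sum_distrib_right)
  qed
  have mono: "AE x in M. mono (\<lambda>n. f n x)"
    by (intro AE_I2 monoI) (auto simp: fpt)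
  have pos: "AE x in M. 0 \<le> f n x" for n by (intro AE_I2) (auto simp: fpt)
  have lim: "AE x in M. (\<lambda>n. f n x) \<longlonglongrightarrow> real (Y t x) * real (Y s x)"
  proof (intro AE_I2 impI)
    fix x assume x: "x \<in> space M"
    have "eventually (\<lambda>n. f n x = real (Y t x) * real (Y s x)) sequentially"
      using eventually_gt_at_top[of "Y s x"] by eventually_elim (simp add: fpt[OF x])
    then show "(\<lambda>n. f n x) \<longlonglongrightarrow> real (Y t x) * real (Y s x)" by (rule tendsto_eventually)
  qed
  have ilim: "(\<lambda>n. integral\<^sup>L M (f n)) \<longlonglongrightarrow> A2 * s * K"
    unfolding fint
    using tendsto_mult_right[OF summable_LIMSEQ[OF sum_ii(1)[OF r s(1) s01(3)]], of K] second_moment(2)[OF r s(1) s01(3)]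
    by simp
  have um: "(\<lambda>x. real (Y t x) * real (Y s x)) \<in> borel_measurable M"
  proof -
    have "(\<lambda>x. real (Y t x)) \<in> borel_measurable M" "(\<lambda>x. real (Y s x)) \<in> borel_measurable M"
      using measurable_compose[OF Ymeas[OF s01(2)], of real borel] measurable_compose[OF Ymeas[OF s01(1)], of real borel]
      by auto
    then show ?thesis by (rule borel_measurable_times)
  qed
  have "(\<integral>\<omega>. real (Y t \<omega>) * real (Y s \<omega>) \<partial>M) = A2 * s * K"
    by (rule integral_monotone_convergence_nonneg(2)[OF fi mono pos lim ilim um])
  also have "A2 * s * K = \<rho>\<^sup>2 / ((\<rho> - 1) * (\<rho> - 2)) * s * (t / s) powr (1 / \<rho>)"
  proof -
    have "(t / s) powr (1 / \<rho>) = t powr (1 / \<rho>) / s powr (1 / \<rho>)" using s by (intro powr_divide)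
    moreover have "K = t powr (1 / \<rho>) / s powr (1 / \<rho>)" unfolding K_def by (simp add: powr_minus divide_inverse)
    ultimately show ?thesis by (simp add: A2_def)
  qed
  finally show ?thesis .
qed

end

theorem corollary2:
  fixes M :: "'a measure" and Y :: "real \<Rightarrow> 'a \<Rightarrow> nat" and \<rho> :: real
  assumes "\<rho> > 0" and "yule_simon_process M Y \<rho>"
  shows "(\<rho> > 1 \<longrightarrow>
            (\<forall>t\<in>{0..1}. (\<integral>\<omega>. real (Y t \<omega>) \<partial>M) = \<rho> / (\<rho> - 1) * t)) \<and>
         (\<rho> > 2 \<longrightarrow>
            (\<forall>s t. 0 < s \<and> s \<le> t \<and> t \<le> 1 \<longrightarrow>
               (\<integral>\<omega>. real (Y t \<omega>) * real (Y s \<omega>) \<partial>M)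
                 = \<rho>\<^sup>2 / ((\<rho> - 1) * (\<rho> - 2)) * s * (t / s) powr (1 / \<rho>)))"
proof -
  interpret YS M Y \<rho> using assms by unfold_locales
  show ?thesis using mean_i cross_moment by auto
qed


end
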